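(* Let $n\ge 2$ and let $\sigma$ be a uniformly random permutation of $E(G_n)$. Then the probability that $B(G_n,\sigma)$ is not odd is in $\mathcal{O}\left(\frac{\log^{2}n}{n}\right)$ as $n\to\infty$.
   Context: $G_n$ is the graph with vertex set $\{1,\dots,2n\}$ and edge set $\{\{i,i+1\}: 1\le i\le 2n-1\}\cup\{\{2n,1\}\}\cup\{\{i,i+n\}: 1\le i\le n\}$; it is $3$-regular. For a permutation $\sigma$ of $E(G_n)$, $B(G_n,\sigma)$ is the bipartite graph with parts $V_B=V(G_n)\times\{0,1\}$ and $W_B=E(G_n)$ and edge set $\{\{(v,0),e\}: v\in e\}\cup\{\{(v,1),e\}: v\in\sigma(e)\}$. A bipartite graph with parts $V,W$ in which every vertex of $V$ has degree $3$ is called odd if for every nonempty $X\subseteq W$ there is some $v\in V$ with $|X\cap N(v)|$ odd. *)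

theory Defs
  imports "HOL-Probability.Probability" "HOL-Combinatorics.Permutations"
    "HOL-Library.Landau_Symbols"
begin

definition Gn_verts :: "nat \<Rightarrow> nat set" where
  "Gn_verts n = {1..2*n}"

definition Gn_edges :: "nat \<Rightarrow> nat set set" where
  "Gn_edges n = {{i, i+1} | i. 1 \<le> i \<and> i \<le> 2*n - 1}
              \<union> {{2*n, 1}}
              \<union> {{i, i+n} | i. 1 \<le> i \<and> i \<le> n}"

definition B_left :: "nat \<Rightarrow> (nat \<times> nat) set" where
  "B_left n = Gn_verts n \<times> {0, 1}"

definition B_right :: "nat \<Rightarrow> nat set set" where
  "B_right n = Gn_edges n"

definition B_edges :: "nat \<Rightarrow> (nat set \<Rightarrow> nat set) \<Rightarrow> ((nat \<times> nat) \<times> nat set) set" where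
  "B_edges n \<sigma> = {((v,0), e) | v e. e \<in> Gn_edges n \<and> v \<in> e}
                 \<union> {((v,1), e) | v e. e \<in> Gn_edges n \<and> v \<in> Gn_verts n \<and> v \<in> \<sigma> e}"

definition nbhd :: "('a \<times> 'b) set \<Rightarrow> 'a \<Rightarrow> 'b set" where
  "nbhd Eb v = {w. (v, w) \<in> Eb}"

definition odd_bip :: "'a set \<Rightarrow> 'b set \<Rightarrow> ('a \<times> 'b) set \<Rightarrow> bool" where
  "odd_bip V W Eb \<longleftrightarrow>
     (\<forall>X. X \<subseteq> W \<and> X \<noteq> {} \<longrightarrow> (\<exists>v\<in>V. odd (card (X \<inter> nbhd Eb v))))"

definition not_odd_prob :: "nat \<Rightarrow> real" where
  "not_odd_prob n =
     measure_pmf.prob (pmf_of_set {\<sigma>. \<sigma> permutes Gn_edges n})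
       {\<sigma>. \<not> odd_bip (B_left n) (B_right n) (B_edges n \<sigma>)}"

end

theory Submission
  imports Defs "HOL-Real_Asymp.Real_Asymp"
begin


lemma exists_perm_map:
  assumes "finite E" "Y \<subseteq> E" "Y' \<subseteq> E" "card Y = card Y'"
  shows "\<exists>\<tau>. \<tau> permutes E \<and> \<tau> ` Y = Y'"
proof -
  have fY: "finite Y" "finite Y'" using assms finite_subset by auto
  obtain f where f: "bij_betw f Y Y'" using finite_same_card_bij[OF fY] assms(4) by blast
  have "card (E - Y) = card (E - Y')" using assms fY by (simp add: card_Diff_subset)
  then obtain g where g: "bij_betw g (E - Y) (E - Y')"
    using finite_same_card_bij[of "E - Y" "E - Y'"] assms(1) by auto
  define \<tau> where "\<tau> = (\<lambda>x. if x \<in> Y then f x else if x \<in> E then g x else x)"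
  have b1: "bij_betw \<tau> Y Y'" using f unfolding \<tau>_def by (rule bij_betw_cong[THEN iffD1, rotated]) auto
  have b2: "bij_betw \<tau> (E - Y) (E - Y')" using g unfolding \<tau>_def by (rule bij_betw_cong[THEN iffD1, rotated]) auto
  have "bij_betw \<tau> (Y \<union> (E - Y)) (Y' \<union> (E - Y'))"
    by (rule bij_betw_combine[OF b1 b2]) auto
  moreover have "Y \<union> (E - Y) = E" "Y' \<union> (E - Y') = E" using assms by auto
  ultimately have "bij_betw \<tau> E E" by simp
  moreover have "{x. \<tau> x \<noteq> x} \<subseteq> E" unfolding \<tau>_def using assms by auto
  ultimately have "\<tau> permutes E" by (simp add: permutes_altdef)
  moreover have "\<tau> ` Y = Y'" using b1 by (simp add: bij_betw_def)
  ultimately show ?thesis by blast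
qed



lemma perm_count_eq:
  assumes "finite E" "X \<subseteq> E" "Y \<subseteq> E" "Y' \<subseteq> E" "card Y = card Y'"
  shows "card {\<sigma>. \<sigma> permutes E \<and> \<sigma> ` X = Y} = card {\<sigma>. \<sigma> permutes E \<and> \<sigma> ` X = Y'}"
proof -
  obtain \<tau> where t: "\<tau> permutes E" "\<tau> ` Y = Y'" using exists_perm_map[OF assms(1,3,4,5)] by blast
  have ti: "inv \<tau> permutes E" using t permutes_inv by blast
  have "bij_betw (\<lambda>\<sigma>. \<tau> \<circ> \<sigma>) {\<sigma>. \<sigma> permutes E \<and> \<sigma> ` X = Y} {\<sigma>. \<sigma> permutes E \<and> \<sigma> ` X = Y'}"
  proof (rule bij_betwI[where g="\<lambda>\<sigma>. inv \<tau> \<circ> \<sigma>"])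
    show "(\<circ>) \<tau> \<in> {\<sigma>. \<sigma> permutes E \<and> \<sigma> ` X = Y} \<rightarrow> {\<sigma>. \<sigma> permutes E \<and> \<sigma> ` X = Y'}"
      using t by (auto simp: permutes_compose image_comp[symmetric])
    show "(\<circ>) (inv \<tau>) \<in> {\<sigma>. \<sigma> permutes E \<and> \<sigma> ` X = Y'} \<rightarrow> {\<sigma>. \<sigma> permutes E \<and> \<sigma> ` X = Y}"
    proof
      fix \<sigma> assume s: "\<sigma> \<in> {\<sigma>. \<sigma> permutes E \<and> \<sigma> ` X = Y'}"
      have "(inv \<tau> \<circ> \<sigma>) ` X = inv \<tau> ` (\<sigma> ` X)" by (rule image_comp[symmetric])
      also have "\<dots> = inv \<tau> ` (\<tau> ` Y)" using s t by simp
      also have "\<dots> = Y" by (simp add: image_comp permutes_inv_o(2)[OF t(1)])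
      finally show "(inv \<tau> \<circ> \<sigma>) \<in> {\<sigma>. \<sigma> permutes E \<and> \<sigma> ` X = Y}" using s ti by (auto simp: permutes_compose)
    qed
    show "inv \<tau> \<circ> (\<tau> \<circ> \<sigma>) = \<sigma>" for \<sigma> by (simp add: o_assoc permutes_inv_o(2)[OF t(1)])
    show "\<tau> \<circ> (inv \<tau> \<circ> \<sigma>) = \<sigma>" for \<sigma> by (simp add: o_assoc permutes_inv_o(1)[OF t(1)])
  qed
  then show ?thesis by (rule bij_betw_same_card)
qed

lemma perm_count:
  assumes "finite E" "X \<subseteq> E" "Y \<subseteq> E" "card Y = card X"
  shows "card {\<sigma>. \<sigma> permutes E \<and> \<sigma> ` X = Y} * (card E choose card X) = fact (card E)"
proof -
  define T where "T = {Z. Z \<subseteq> E \<and> card Z = card X}"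
  define P where "P = {\<sigma>. \<sigma> permutes E}"
  have fT: "finite T" unfolding T_def using assms(1) by auto
  have PU: "P = (\<Union>Z\<in>T. {\<sigma>. \<sigma> permutes E \<and> \<sigma> ` X = Z})"
  proof
    show "P \<subseteq> (\<Union>Z\<in>T. {\<sigma>. \<sigma> permutes E \<and> \<sigma> ` X = Z})"
    proof
      fix \<sigma> assume "\<sigma> \<in> P"
      then have s: "\<sigma> permutes E" by (simp add: P_def)
      have "\<sigma> ` X \<subseteq> E" using s assms(2) permutes_image[OF s] by blast
      moreover have "card (\<sigma> ` X) = card X" using card_image permutes_inj[OF s] inj_on_subset by blast
      ultimately show "\<sigma> \<in> (\<Union>Z\<in>T. {\<sigma>. \<sigma> permutes E \<and> \<sigma> ` X = Z})" using s by (auto simp: T_def)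
    qed
  qed (auto simp: P_def)
  have "card P = (\<Sum>Z\<in>T. card {\<sigma>. \<sigma> permutes E \<and> \<sigma> ` X = Z})"
    unfolding PU
    by (rule card_UN_disjoint[OF fT]) (use finite_permutations[OF assms(1)] in \<open>auto intro: finite_subset[where B="{\<sigma>. \<sigma> permutes E}"]\<close>)
  also have "\<dots> = (\<Sum>Z\<in>T. card {\<sigma>. \<sigma> permutes E \<and> \<sigma> ` X = Y})"
    by (rule sum.cong) (use assms in \<open>auto simp: T_def intro!: perm_count_eq\<close>)
  also have "\<dots> = card T * card {\<sigma>. \<sigma> permutes E \<and> \<sigma> ` X = Y}" by simp
  also have "card T = card E choose card X" unfolding T_def using n_subsets[OF assms(1)] by simp
  finally show ?thesis using card_permutations[OF refl assms(1)] by (simp add: P_def mult.commute)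
qed



definition rail :: "nat \<Rightarrow> nat \<Rightarrow> nat set" where
  "rail n j = {j+1, if j+1 = 2*n then 1 else j+2}"
definition rung :: "nat \<Rightarrow> nat \<Rightarrow> nat set" where
  "rung n j = {j+1, j+1+n}"
definition pv :: "nat \<Rightarrow> nat \<Rightarrow> nat" where
  "pv n u = (if u = 0 then 2*n - 1 else u - 1)"

lemma Gn_edges_alt:
  assumes "n \<ge> 2"
  shows "Gn_edges n = rail n ` {..<2*n} \<union> rung n ` {..<n}"
proof -
  have a: "{{i, i+1} | i. 1 \<le> i \<and> i \<le> 2*n - 1} \<union> {{2*n, 1}} = rail n ` {..<2*n}"
  proof (intro equalityI subsetI)
    fix e assume "e \<in> {{i, i+1} | i. 1 \<le> i \<and> i \<le> 2*n - 1} \<union> {{2*n, 1}}"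
    then consider i where "e = {i,i+1}" "1 \<le> i" "i \<le> 2*n-1" | "e = {2*n,1}" by blast
    then show "e \<in> rail n ` {..<2*n}"
    proof cases
      case 1
      then have "e = rail n (i - 1)" using assms by (auto simp: rail_def)
      moreover have "i - 1 < 2*n" using 1 assms by auto
      ultimately show ?thesis by blast
    next
      case 2
      then have "e = rail n (2*n - 1)" using assms by (auto simp: rail_def)
      moreover have "2*n - 1 < 2*n" using assms by auto
      ultimately show ?thesis by blast
    qed
  next
    fix e assume "e \<in> rail n ` {..<2*n}"
    then obtain j where j: "j < 2*n" "e = rail n j" by blast
    show "e \<in> {{i, i+1} | i. 1 \<le> i \<and> i \<le> 2*n - 1} \<union> {{2*n, 1}}"
    proof (cases "j + 1 = 2*n")
      case True then show ?thesis using j by (auto simp: rail_def)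
    next
      case False
      then have "e = {j+1, (j+1)+1}" "1 \<le> j+1" "j+1 \<le> 2*n-1" using j by (auto simp: rail_def)
      then show ?thesis by blast
    qed
  qed
  have b: "{{i, i+n} | i. 1 \<le> i \<and> i \<le> n} = rung n ` {..<n}"
  proof (intro equalityI subsetI)
    fix e assume "e \<in> {{i, i+n} | i. 1 \<le> i \<and> i \<le> n}"
    then obtain i where i: "e = {i,i+n}" "1 \<le> i" "i \<le> n" by blast
    then have "e = rung n (i-1)" "i - 1 < n" by (auto simp: rung_def)
    then show "e \<in> rung n ` {..<n}" by blast
  next
    fix e assume "e \<in> rung n ` {..<n}"
    then obtain j where j: "j < n" "e = rung n j" by blast
    then have "e = {j+1, (j+1)+n}" "1 \<le> j+1" "j+1 \<le> n" by (auto simp: rung_def)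
    then show "e \<in> {{i, i+n} | i. 1 \<le> i \<and> i \<le> n}" by blast
  qed
  show ?thesis unfolding Gn_edges_def by (simp only: a b)
qed

lemma rail_inj:
  assumes "n \<ge> 2" "j < 2*n" "j' < 2*n" "rail n j = rail n j'"
  shows "j = j'"
  using assms unfolding rail_def by (auto simp: doubleton_eq_iff split: if_splits)

lemma rung_inj:
  assumes "j < n" "j' < n" "rung n j = rung n j'"
  shows "j = j'"
  using assms unfolding rung_def by (auto simp: doubleton_eq_iff)

lemma rail_ne_rung:
  assumes "n \<ge> 2" "j < 2*n" "j' < n"
  shows "rail n j \<noteq> rung n j'"
  using assms unfolding rail_def rung_def by (auto simp: doubleton_eq_iff split: if_splits)

lemma rail_mem:
  assumes "n \<ge> 2" "j < 2*n" "u < 2*n"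
  shows "u + 1 \<in> rail n j \<longleftrightarrow> (j = u \<or> j = pv n u)"
  using assms unfolding rail_def pv_def by (auto split: if_splits)

lemma rung_mem:
  assumes "n \<ge> 2" "j < n" "u < 2*n"
  shows "u + 1 \<in> rung n j \<longleftrightarrow> j = u mod n"
proof (cases "u < n")
  case True then show ?thesis using assms unfolding rung_def by auto
next
  case False
  then have "u mod n = u - n" using assms by (simp add: le_mod_geq)
  then show ?thesis using assms False unfolding rung_def by auto
qed

lemma pv_lt: "n \<ge> 1 \<Longrightarrow> u < 2*n \<Longrightarrow> pv n u < 2*n"
  unfolding pv_def by auto

lemma pv_ne: "n \<ge> 1 \<Longrightarrow> u < 2*n \<Longrightarrow> pv n u \<noteq> u"
  unfolding pv_def by auto

lemma star_card:
  assumes "n \<ge> 2" "X \<subseteq> Gn_edges n" "u < 2*n"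
  shows "card {e\<in>X. u+1 \<in> e} = of_bool (rail n u \<in> X) + of_bool (rail n (pv n u) \<in> X) + of_bool (rung n (u mod n) \<in> X)"
proof -
  have n: "n > 0" using assms by auto
  have "{e\<in>X. u+1 \<in> e} = X \<inter> {rail n u, rail n (pv n u), rung n (u mod n)}"
  proof (intro equalityI subsetI)
    fix e assume e: "e \<in> {e\<in>X. u+1 \<in> e}"
    then have eX: "e \<in> X" and ue: "u+1 \<in> e" by auto
    have "e \<in> rail n ` {..<2*n} \<union> rung n ` {..<n}" using assms(2) eX Gn_edges_alt[OF assms(1)] by blast
    then consider j where "j < 2*n" "e = rail n j" | j where "j < n" "e = rung n j" by blast
    then have "e \<in> {rail n u, rail n (pv n u), rung n (u mod n)}"
    proof cases
      case 1 then have "j = u \<or> j = pv n u" using rail_mem[OF assms(1) _ assms(3)] ue by simp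
      then show ?thesis using 1 by auto
    next
      case 2 then have "j = u mod n" using rung_mem[OF assms(1) _ assms(3)] ue by simp
      then show ?thesis using 2 by auto
    qed
    then show "e \<in> X \<inter> {rail n u, rail n (pv n u), rung n (u mod n)}" using eX by simp
  next
    fix e assume e: "e \<in> X \<inter> {rail n u, rail n (pv n u), rung n (u mod n)}"
    have a: "u+1 \<in> rail n u" using rail_mem[OF assms(1) assms(3) assms(3)] by simp
    have b: "u+1 \<in> rail n (pv n u)" using rail_mem[OF assms(1) pv_lt[OF _ assms(3)] assms(3)] n by simp
    have c: "u+1 \<in> rung n (u mod n)" using rung_mem[OF assms(1) _ assms(3)] n by simp
    show "e \<in> {e\<in>X. u+1 \<in> e}" using e a b c by auto
  qed
  moreover have d1: "rail n u \<noteq> rail n (pv n u)"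
    using rail_inj[OF assms(1) assms(3) pv_lt[OF _ assms(3)]] pv_ne[OF _ assms(3)] n by force
  moreover have d2: "rail n u \<noteq> rung n (u mod n)" "rail n (pv n u) \<noteq> rung n (u mod n)"
    using rail_ne_rung[OF assms(1)] assms(3) pv_lt[OF _ assms(3)] n by auto
  ultimately show ?thesis by (simp add: card_insert_if)
qed



definition Aof :: "nat \<Rightarrow> nat set set \<Rightarrow> nat set" where
  "Aof n X = {j. j < 2*n \<and> rail n j \<in> X}"
definition Bof :: "nat \<Rightarrow> nat set set \<Rightarrow> nat set" where
  "Bof n X = {j. j < n \<and> rung n j \<in> X}"
definition evAB :: "nat \<Rightarrow> nat set \<Rightarrow> nat set \<Rightarrow> bool" where
  "evAB n A B = (\<forall>u<2*n. even (of_bool (u\<in>A) + of_bool (pv n u \<in> A) + of_bool (u mod n \<in> B) :: nat))"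
definition evenG :: "nat \<Rightarrow> nat set set \<Rightarrow> bool" where
  "evenG n X = (\<forall>v\<in>Gn_verts n. even (card {e\<in>X. v \<in> e}))"

lemma X_decomp:
  assumes "n \<ge> 2" "X \<subseteq> Gn_edges n"
  shows "X = rail n ` Aof n X \<union> rung n ` Bof n X"
proof -
  have "X \<subseteq> rail n ` {..<2*n} \<union> rung n ` {..<n}" using assms Gn_edges_alt by blast
  then show ?thesis unfolding Aof_def Bof_def by auto
qed

lemma card_X:
  assumes "n \<ge> 2" "X \<subseteq> Gn_edges n"
  shows "card X = card (Aof n X) + card (Bof n X)"
proof -
  have fA: "finite (Aof n X)" "finite (Bof n X)" unfolding Aof_def Bof_def by auto
  have i1: "inj_on (rail n) (Aof n X)" using rail_inj[OF assms(1)] unfolding Aof_def inj_on_def by blast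
  have i2: "inj_on (rung n) (Bof n X)" using rung_inj unfolding Bof_def inj_on_def by blast
  have d: "rail n ` Aof n X \<inter> rung n ` Bof n X = {}" using rail_ne_rung[OF assms(1)] unfolding Aof_def Bof_def by auto
  have "card X = card (rail n ` Aof n X \<union> rung n ` Bof n X)" using X_decomp[OF assms] by simp
  also have "\<dots> = card (rail n ` Aof n X) + card (rung n ` Bof n X)"
    using d fA by (simp add: card_Un_disjoint)
  also have "\<dots> = card (Aof n X) + card (Bof n X)" using i1 i2 by (simp add: card_image)
  finally show ?thesis .
qed

lemma X_inj:
  assumes "n \<ge> 2" "X \<subseteq> Gn_edges n" "Y \<subseteq> Gn_edges n" "Aof n X = Aof n Y" "Bof n X = Bof n Y"
  shows "X = Y"
  using X_decomp[OF assms(1,2)] X_decomp[OF assms(1,3)] assms(4,5) by simp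

lemma evenG_iff:
  assumes "n \<ge> 2" "X \<subseteq> Gn_edges n"
  shows "evenG n X \<longleftrightarrow> evAB n (Aof n X) (Bof n X)"
proof -
  have n: "n > 0" using assms by auto
  have "even (card {e\<in>X. u+1 \<in> e}) \<longleftrightarrow>
     even (of_bool (u\<in>Aof n X) + of_bool (pv n u \<in> Aof n X) + of_bool (u mod n \<in> Bof n X) :: nat)"
    if u: "u < 2*n" for u
  proof -
    have "u \<in> Aof n X \<longleftrightarrow> rail n u \<in> X" using u by (simp add: Aof_def)
    moreover have "pv n u \<in> Aof n X \<longleftrightarrow> rail n (pv n u) \<in> X" using pv_lt[OF _ u] n by (simp add: Aof_def)
    moreover have "u mod n \<in> Bof n X \<longleftrightarrow> rung n (u mod n) \<in> X" using n by (simp add: Bof_def)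
    ultimately show ?thesis using star_card[OF assms u] by simp
  qed
  moreover have "(\<forall>v\<in>Gn_verts n. P v) \<longleftrightarrow> (\<forall>u<2*n. P (u+1))" for P
  proof
    assume "\<forall>v\<in>Gn_verts n. P v" then show "\<forall>u<2*n. P (u+1)" by (auto simp: Gn_verts_def)
  next
    assume h: "\<forall>u<2*n. P (u+1)"
    show "\<forall>v\<in>Gn_verts n. P v"
    proof
      fix v assume "v \<in> Gn_verts n"
      then have "v - 1 < 2*n" "v = (v-1)+1" by (auto simp: Gn_verts_def)
      then show "P v" using h by metis
    qed
  qed
  ultimately show ?thesis unfolding evenG_def evAB_def by simp
qed



definition Tset :: "nat \<Rightarrow> nat set set set" where
  "Tset n = {X. X \<subseteq> Gn_edges n \<and> X \<noteq> {} \<and> evenG n X}"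

lemma nbhd0: "nbhd (B_edges n \<sigma>) (v, 0) = {e \<in> Gn_edges n. v \<in> e}"
  unfolding nbhd_def B_edges_def by auto

lemma nbhd1: "v \<in> Gn_verts n \<Longrightarrow> nbhd (B_edges n \<sigma>) (v, 1) = {e \<in> Gn_edges n. v \<in> \<sigma> e}"
  unfolding nbhd_def B_edges_def by auto

lemma not_odd_witness:
  assumes "\<sigma> permutes Gn_edges n" "\<not> odd_bip (B_left n) (B_right n) (B_edges n \<sigma>)"
  shows "\<exists>X\<in>Tset n. \<sigma> ` X \<in> Tset n"
proof -
  obtain X where X: "X \<subseteq> Gn_edges n" "X \<noteq> {}"
    and ev: "\<forall>v\<in>B_left n. even (card (X \<inter> nbhd (B_edges n \<sigma>) v))"
    using assms(2) unfolding odd_bip_def B_right_def by auto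
  have "evenG n X" unfolding evenG_def
  proof
    fix v assume v: "v \<in> Gn_verts n"
    have "X \<inter> nbhd (B_edges n \<sigma>) (v, 0) = {e\<in>X. v \<in> e}" using X(1) by (auto simp: nbhd0)
    moreover have "(v,0) \<in> B_left n" using v by (simp add: B_left_def)
    ultimately show "even (card {e\<in>X. v \<in> e})" using ev by metis
  qed
  moreover have "evenG n (\<sigma> ` X)" unfolding evenG_def
  proof
    fix v assume v: "v \<in> Gn_verts n"
    have "X \<inter> nbhd (B_edges n \<sigma>) (v, 1) = {e\<in>X. v \<in> \<sigma> e}" unfolding nbhd1[OF v] using X(1) by auto
    moreover have "(v,1) \<in> B_left n" using v by (simp add: B_left_def)
    ultimately have "even (card {e\<in>X. v \<in> \<sigma> e})" using ev by metis
    moreover have "{e\<in>\<sigma> ` X. v \<in> e} = \<sigma> ` {e\<in>X. v \<in> \<sigma> e}" by auto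
    moreover have "inj_on \<sigma> {e\<in>X. v \<in> \<sigma> e}" using permutes_inj[OF assms(1)] by (simp add: inj_on_def inj_def)
    ultimately show "even (card {e\<in>\<sigma> ` X. v \<in> e})" by (simp add: card_image)
  qed
  moreover have "\<sigma> ` X \<subseteq> Gn_edges n" using permutes_image[OF assms(1)] X(1) by blast
  ultimately show ?thesis using X unfolding Tset_def by auto
qed

definition cntT :: "nat \<Rightarrow> nat \<Rightarrow> nat" where
  "cntT n k = card {Y \<in> Tset n. card Y = k}"

lemma card_E: "n \<ge> 2 \<Longrightarrow> card (Gn_edges n) = 3*n"
proof -
  assume n: "n \<ge> 2"
  have i1: "inj_on (rail n) {..<2*n}" using rail_inj[OF n] unfolding inj_on_def by blast
  have i2: "inj_on (rung n) {..<n}" using rung_inj unfolding inj_on_def by blast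
  have d: "rail n ` {..<2*n} \<inter> rung n ` {..<n} = {}" using rail_ne_rung[OF n] by auto
  have "card (Gn_edges n) = card (rail n ` {..<2*n}) + card (rung n ` {..<n})"
    unfolding Gn_edges_alt[OF n] using d by (simp add: card_Un_disjoint)
  also have "\<dots> = 3*n" using i1 i2 by (simp add: card_image)
  finally show ?thesis .
qed

lemma finite_E: "finite (Gn_edges n)"
proof -
  have "Gn_edges n \<subseteq> Pow {0..2*n+1}" unfolding Gn_edges_def by auto
  then show ?thesis by (rule finite_subset) simp
qed

lemma prob_bound:
  assumes n: "n \<ge> 2"
  shows "not_odd_prob n \<le> (\<Sum>k\<le>3*n. real (cntT n k)^2 / real ((3*n) choose k))"
proof -
  define E where "E = Gn_edges n"
  define P where "P = {\<sigma>. \<sigma> permutes E}"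
  define T where "T = Tset n"
  define m where "m = card E"
  have fE: "finite E" unfolding E_def by (rule finite_E)
  have m3: "m = 3*n" unfolding m_def E_def using card_E[OF n] .
  have fP: "finite P" unfolding P_def using finite_permutations[OF fE] .
  have cP: "card P = fact m" unfolding P_def m_def using card_permutations[OF refl fE] .
  have Pne: "P \<noteq> {}" using cP by auto
  have fT: "finite T" unfolding T_def Tset_def E_def
    by (rule finite_subset[of _ "Pow (Gn_edges n)"]) (auto simp: finite_E)
  have TE: "X \<in> T \<Longrightarrow> X \<subseteq> E" for X unfolding T_def Tset_def E_def by auto
  define Ev where "Ev = {\<sigma>. \<not> odd_bip (B_left n) (B_right n) (B_edges n \<sigma>)}"
  have sub: "P \<inter> Ev \<subseteq> (\<Union>X\<in>T. {\<sigma>\<in>P. \<sigma> ` X \<in> T})"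
    using not_odd_witness unfolding P_def Ev_def T_def E_def by blast
  have cnt1: "real (card {\<sigma>\<in>P. \<sigma> ` X \<in> T}) = real (cntT n (card X)) * fact m / real (m choose card X)"
    if X: "X \<in> T" for X
  proof -
    define U where "U = {Y\<in>T. card Y = card X}"
    have fU: "finite U" using fT unfolding U_def by auto
    have eq: "{\<sigma>\<in>P. \<sigma> ` X \<in> T} = (\<Union>Y\<in>U. {\<sigma>. \<sigma> permutes E \<and> \<sigma> ` X = Y})"
    proof (intro equalityI subsetI)
      fix \<sigma> assume "\<sigma> \<in> {\<sigma>\<in>P. \<sigma> ` X \<in> T}"
      then have s: "\<sigma> permutes E" "\<sigma> ` X \<in> T" by (auto simp: P_def)
      have "card (\<sigma> ` X) = card X" using card_image permutes_inj[OF s(1)] inj_on_subset by blast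
      then show "\<sigma> \<in> (\<Union>Y\<in>U. {\<sigma>. \<sigma> permutes E \<and> \<sigma> ` X = Y})" using s unfolding U_def by blast
    next
      fix \<sigma> assume "\<sigma> \<in> (\<Union>Y\<in>U. {\<sigma>. \<sigma> permutes E \<and> \<sigma> ` X = Y})"
      then show "\<sigma> \<in> {\<sigma>\<in>P. \<sigma> ` X \<in> T}" unfolding U_def P_def by auto
    qed
    have "card {\<sigma>\<in>P. \<sigma> ` X \<in> T} = (\<Sum>Y\<in>U. card {\<sigma>. \<sigma> permutes E \<and> \<sigma> ` X = Y})"
      unfolding eq
      by (rule card_UN_disjoint[OF fU]) (use finite_permutations[OF fE] in \<open>auto intro: finite_subset[where B="{\<sigma>. \<sigma> permutes E}"]\<close>)
    then have "real (card {\<sigma>\<in>P. \<sigma> ` X \<in> T}) = (\<Sum>Y\<in>U. real (card {\<sigma>. \<sigma> permutes E \<and> \<sigma> ` X = Y}))"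
      by simp
    also have "\<dots> = (\<Sum>Y\<in>U. fact m / real (m choose card X))"
    proof (rule sum.cong[OF refl])
      fix Y assume "Y \<in> U"
      then have Y: "Y \<subseteq> E" "card Y = card X" unfolding U_def using TE by auto
      have XE: "X \<subseteq> E" using TE X by auto
      have pos: "real (m choose card X) > 0"
        using card_mono[OF fE XE] by (simp add: m_def)
      have "real (card {\<sigma>. \<sigma> permutes E \<and> \<sigma> ` X = Y}) * real (m choose card X) = fact m"
        using perm_count[OF fE XE Y] unfolding m_def by (simp only: of_nat_mult[symmetric] of_nat_fact)
      then show "real (card {\<sigma>. \<sigma> permutes E \<and> \<sigma> ` X = Y}) = fact m / real (m choose card X)"
        using pos by (simp add: field_simps)
    qed
    also have "\<dots> = real (card U) * fact m / real (m choose card X)" by simp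
    also have "card U = cntT n (card X)" unfolding U_def cntT_def T_def by simp
    finally show ?thesis .
  qed
  have "real (card (P \<inter> Ev)) \<le> real (card (\<Union>X\<in>T. {\<sigma>\<in>P. \<sigma> ` X \<in> T}))"
    using card_mono[OF _ sub] fT fP by (simp add: finite_UN)
  also have "\<dots> \<le> real (\<Sum>X\<in>T. card {\<sigma>\<in>P. \<sigma> ` X \<in> T})"
    using card_UN_le[OF fT] by (simp only: of_nat_le_iff)
  also have "\<dots> = (\<Sum>X\<in>T. real (cntT n (card X)) * fact m / real (m choose card X))"
    by (simp add: cnt1)
  finally have A: "real (card (P \<inter> Ev)) \<le> (\<Sum>X\<in>T. real (cntT n (card X)) * fact m / real (m choose card X))" .
  have grp: "(\<Sum>X\<in>T. g (card X)) = (\<Sum>k\<le>m. real (cntT n k) * g k)" for g :: "nat \<Rightarrow> real"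
  proof -
    have img: "card ` T \<subseteq> {..m}" using TE card_mono[OF fE] unfolding m_def by auto
    have "(\<Sum>X\<in>T. g (card X)) = (\<Sum>k\<le>m. \<Sum>X\<in>{X. X \<in> T \<and> card X = k}. g (card X))"
      using sum.group[OF fT _ img, of "\<lambda>X. g (card X)"] by simp
    also have "\<dots> = (\<Sum>k\<le>m. real (cntT n k) * g k)"
    proof (rule sum.cong[OF refl])
      fix k
      have "(\<Sum>X\<in>{X. X \<in> T \<and> card X = k}. g (card X)) = (\<Sum>X\<in>{X. X \<in> T \<and> card X = k}. g k)"
        by (rule sum.cong) auto
      also have "\<dots> = real (cntT n k) * g k" unfolding cntT_def T_def by simp
      finally show "(\<Sum>X\<in>{X. X \<in> T \<and> card X = k}. g (card X)) = real (cntT n k) * g k" .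
    qed
    finally show ?thesis .
  qed
  have "not_odd_prob n = real (card (P \<inter> Ev)) / real (card P)"
    unfolding not_odd_prob_def P_def[symmetric] E_def[symmetric] Ev_def[symmetric]
    using measure_pmf_of_set[OF Pne fP] by simp
  also have "\<dots> \<le> (\<Sum>X\<in>T. real (cntT n (card X)) * fact m / real (m choose card X)) / fact m"
    using A cP by (simp add: divide_right_mono)
  also have "\<dots> = (\<Sum>X\<in>T. real (cntT n (card X)) / real (m choose card X))"
    by (simp add: sum_divide_distrib)
  also have "\<dots> = (\<Sum>k\<le>m. real (cntT n k) * (real (cntT n k) / real (m choose k)))"
    by (rule grp)
  also have "\<dots> = (\<Sum>k\<le>3*n. real (cntT n k)^2 / real ((3*n) choose k))"
    unfolding m3 by (simp add: power2_eq_square)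
  finally show ?thesis .
qed



lemma pv_inj: "n \<ge> 1 \<Longrightarrow> inj_on (pv n) {..<2*n}"
  unfolding inj_on_def pv_def by (auto split: if_splits)

lemma pv_img: "n \<ge> 1 \<Longrightarrow> pv n ` {..<2*n} = {..<2*n}"
  by (rule endo_inj_surj) (auto simp: pv_lt pv_inj)

lemma sum_pv:
  fixes f :: "nat \<Rightarrow> 'a::comm_monoid_add"
  assumes "n \<ge> 1"
  shows "(\<Sum>u<2*n. f (pv n u)) = (\<Sum>u<2*n. f u)"
proof -
  have "(\<Sum>u<2*n. f u) = sum f (pv n ` {..<2*n})" using pv_img[OF assms] by simp
  also have "\<dots> = (\<Sum>u<2*n. f (pv n u))" by (simp add: sum.reindex[OF pv_inj[OF assms]])
  finally show ?thesis by simp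
qed

lemma sum_mod:
  fixes f :: "nat \<Rightarrow> nat"
  assumes "n \<ge> 1"
  shows "(\<Sum>u<2*n. f (u mod n)) = 2 * (\<Sum>u<n. f u)"
proof -
  have U: "{..<2*n} = {..<n} \<union> {n..<2*n}" by auto
  have "(\<Sum>u<2*n. f (u mod n)) = (\<Sum>u\<in>{..<n} \<union> {n..<2*n}. f (u mod n))" by (simp only: U)
  also have "\<dots> = (\<Sum>u<n. f (u mod n)) + (\<Sum>u\<in>{n..<2*n}. f (u mod n))"
    by (rule sum.union_disjoint) auto
  also have "(\<Sum>u<n. f (u mod n)) = (\<Sum>u<n. f u)" by (rule sum.cong) auto
  also have "(\<Sum>u\<in>{n..<2*n}. f (u mod n)) = (\<Sum>u\<in>{0+n..<n+n}. f (u mod n))" by (simp add: mult_2)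
  also have "\<dots> = (\<Sum>u\<in>{0..<n}. f ((n + u) mod n))" using sum.atLeastLessThan_shift_bounds[of "\<lambda>u. f (u mod n)" 0 n n] by (simp add: comp_def)
  also have "\<dots> = (\<Sum>u<n. f u)" by (rule sum.cong) (auto simp: lessThan_atLeast0)
  finally show ?thesis by simp
qed

lemma card_as_sum:
  fixes N :: nat
  assumes "A \<subseteq> {..<N}"
  shows "(\<Sum>u<N. of_bool (u \<in> A) :: nat) = card A"
proof -
  have "{..<N} \<inter> {x. x \<in> A} = A" using assms by auto
  moreover have "(\<Sum>u<N. of_bool (u \<in> A) :: nat) = card ({..<N} \<inter> {x. x \<in> A})"
    by (subst sum_of_bool_eq) simp_all
  ultimately show ?thesis by simp
qed

lemma handshake:
  assumes n: "n \<ge> 1" and ev: "evAB n A B" and A: "A \<subseteq> {..<2*n}" and B: "B \<subseteq> {..<n}"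
  shows "card B \<le> card A" "card A + card B \<le> 2*n"
proof -
  define a where "a u = (of_bool (u\<in>A) + of_bool (pv n u \<in> A) :: nat)" for u
  define b where "b u = (of_bool (u mod n \<in> B) :: nat)" for u
  have e: "even (a u + b u)" if "u < 2*n" for u using ev that unfolding evAB_def a_def b_def by auto
  have ba: "b u \<le> a u" if "u < 2*n" for u
  proof -
    have "b u \<le> 1" "a u \<le> 2" unfolding a_def b_def by auto
    then show ?thesis using e[OF that] by presburger
  qed
  have ab2: "a u + b u \<le> 2" if "u < 2*n" for u
  proof -
    have "b u \<le> 1" "a u \<le> 2" unfolding a_def b_def by auto
    then show ?thesis using e[OF that] by presburger
  qed
  have sa: "(\<Sum>u<2*n. a u) = 2 * card A"
  proof -
    have "(\<Sum>u<2*n. a u) = (\<Sum>u<2*n. of_bool (u\<in>A)) + (\<Sum>u<2*n. of_bool (pv n u \<in> A))"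
      unfolding a_def by (simp add: sum.distrib)
    also have "(\<Sum>u<2*n. of_bool (pv n u \<in> A) :: nat) = (\<Sum>u<2*n. of_bool (u \<in> A))"
      using sum_pv[OF n, of "\<lambda>u. of_bool (u \<in> A) :: nat"] by simp
    finally show ?thesis using card_as_sum[OF A] by simp
  qed
  have sb: "(\<Sum>u<2*n. b u) = 2 * card B"
    unfolding b_def using sum_mod[OF n, of "\<lambda>u. of_bool (u \<in> B)"] card_as_sum[OF B] by simp
  have "(\<Sum>u<2*n. b u) \<le> (\<Sum>u<2*n. a u)" by (rule sum_mono) (simp add: ba)
  then show "card B \<le> card A" using sa sb by simp
  have "(\<Sum>u<2*n. a u + b u) \<le> (\<Sum>u<(2*n::nat). 2)" by (rule sum_mono) (simp add: ab2)
  then have "2 * card A + 2 * card B \<le> 2 * (2 * n)" using sa sb by (simp add: sum.distrib)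
  then show "card A + card B \<le> 2*n" by simp
qed



lemma propagate:
  assumes "n \<ge> 1" "\<And>u. u < 2*n \<Longrightarrow> d u = d (pv n u)"
  shows "u < 2*n \<Longrightarrow> d u = d 0"
proof (induction u)
  case 0 then show ?case by simp
next
  case (Suc u)
  have "pv n (Suc u) = u" unfolding pv_def by simp
  then show ?case using assms(2)[OF Suc.prems] Suc by simp
qed

lemma fiber:
  assumes n: "n \<ge> 1" and ev: "evAB n A B" "evAB n A' B"
    and A: "A \<subseteq> {..<2*n}" "A' \<subseteq> {..<2*n}"
  shows "A' = A \<or> A' = {..<2*n} - A"
proof -
  define d where "d u = (u \<in> A \<longleftrightarrow> u \<in> A')" for u
  have step: "d u = d (pv n u)" if u: "u < 2*n" for u
  proof -
    have e1: "even (of_bool (u\<in>A) + of_bool (pv n u \<in> A) + of_bool (u mod n \<in> B) :: nat)"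
      using ev(1) u unfolding evAB_def by blast
    have e2: "even (of_bool (u\<in>A') + of_bool (pv n u \<in> A') + of_bool (u mod n \<in> B) :: nat)"
      using ev(2) u unfolding evAB_def by blast
    show ?thesis using e1 e2 unfolding d_def
      by (cases "u\<in>A"; cases "u\<in>A'"; cases "pv n u\<in>A"; cases "pv n u\<in>A'"; cases "u mod n \<in> B"; simp)
  qed
  have c: "d u = d 0" if "u < 2*n" for u using propagate[of n d, OF n step that] by blast
  show ?thesis
  proof (cases "d 0")
    case True
    then have "\<forall>u<2*n. u \<in> A \<longleftrightarrow> u \<in> A'" using c unfolding d_def by blast
    then show ?thesis using A by blast
  next
    case False
    then have "\<forall>u<2*n. u \<in> A \<longleftrightarrow> u \<notin> A'" using c unfolding d_def by blast
    then show ?thesis using A by blast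
  qed
qed

lemma sh_lt: "(u::nat) < 2*n \<Longrightarrow> u < n \<Longrightarrow> (u + n) mod (2*n) = u + n" by simp
lemma sh_ge: "(u::nat) < 2*n \<Longrightarrow> n \<le> u \<Longrightarrow> (u + n) mod (2*n) = u - n"
proof -
  assume "u < 2*n" "n \<le> u"
  then have "u + n = (u - n) + 2*n" "u - n < 2*n" by auto
  then show ?thesis by (metis mod_add_self2 mod_less)
qed

lemma pv_sh:
  assumes "n \<ge> 1" "u < 2*n"
  shows "pv n ((u + n) mod (2*n)) = (pv n u + n) mod (2*n)"
proof (cases "u < n")
  case True
  show ?thesis
  proof (cases "u = 0")
    case u0: True
    have "pv n u = 2*n - 1" using u0 unfolding pv_def by simp
    moreover have "((2*n-1) + n) mod (2*n) = n - 1" using sh_ge[of "2*n-1" n] assms(1) by simp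
    moreover have "pv n ((u + n) mod (2*n)) = n - 1" using u0 assms(1) unfolding pv_def by simp
    ultimately show ?thesis by simp
  next
    case False
    then show ?thesis using assms True unfolding pv_def by (simp add: sh_lt sh_ge)
  qed
next
  case False
  show ?thesis
  proof (cases "u = n")
    case True
    then show ?thesis using assms unfolding pv_def by (simp add: sh_lt sh_ge)
  next
    case un: False
    have "pv n u = u - 1" using False assms unfolding pv_def by simp
    moreover have "((u-1) + n) mod (2*n) = u - 1 - n" using sh_ge[of "u-1" n] assms False un by simp
    moreover have "pv n ((u + n) mod (2*n)) = u - n - 1" using sh_ge[of u n] assms False un unfolding pv_def by simp
    ultimately show ?thesis by simp
  qed
qed

lemma shift_inv:
  assumes n: "n \<ge> 1" and ev: "evAB n A B" and A: "A \<subseteq> {..<2*n}" and cA: "card A < n"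
  shows "u < n \<Longrightarrow> (u \<in> A \<longleftrightarrow> u + n \<in> A)"
proof -
  define sh where "sh u = (u + n) mod (2*n)" for u
  define d where "d u = (u \<in> A \<longleftrightarrow> sh u \<in> A)" for u
  have step: "d u = d (pv n u)" if u: "u < 2*n" for u
  proof -
    have shu: "sh u < 2*n" unfolding sh_def using n by simp
    have e1: "even (of_bool (u\<in>A) + of_bool (pv n u \<in> A) + of_bool (u mod n \<in> B) :: nat)"
      using ev u unfolding evAB_def by blast
    have e2: "even (of_bool (sh u\<in>A) + of_bool (pv n (sh u) \<in> A) + of_bool (sh u mod n \<in> B) :: nat)"
      using ev shu unfolding evAB_def by blast
    have m: "sh u mod n = u mod n"
    proof -
      have "sh u mod n = (u + n) mod n" unfolding sh_def by (rule mod_mod_cancel) simp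
      then show ?thesis by simp
    qed
    have p: "pv n (sh u) = sh (pv n u)" unfolding sh_def using pv_sh[OF n u] .
    show ?thesis using e1 e2 unfolding d_def m p
      by (cases "u\<in>A"; cases "sh u\<in>A"; cases "pv n u\<in>A"; cases "sh (pv n u)\<in>A"; cases "u mod n \<in> B"; simp)
  qed
  have c: "d u = d 0" if "u < 2*n" for u using propagate[of n d, OF n step that] by blast
  have "d 0"
  proof (rule ccontr)
    assume nd: "\<not> d 0"
    then have flip: "u \<in> A \<longleftrightarrow> u + n \<notin> A" if "u < n" for u
      using c[of u] that unfolding d_def sh_def by (simp add: sh_lt)
    define A1 where "A1 = A \<inter> {..<n}"
    have A2: "A \<inter> {n..<2*n} = (\<lambda>u. u + n) ` ({..<n} - A1)"
    proof (intro equalityI subsetI)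
      fix x assume x: "x \<in> A \<inter> {n..<2*n}"
      then have xn: "x - n < n" "x - n + n = x" by auto
      have "x - n \<notin> A1" using flip[of "x-n"] x xn unfolding A1_def by simp
      then have "x - n \<in> {..<n} - A1" using xn by simp
      then show "x \<in> (\<lambda>u. u + n) ` ({..<n} - A1)" using xn(2) by (metis image_eqI)
    next
      fix x assume "x \<in> (\<lambda>u. u + n) ` ({..<n} - A1)"
      then obtain u where u: "u \<in> {..<n} - A1" "x = u + n" by blast
      then have "u < n" "u \<notin> A" unfolding A1_def by auto
      then have "u + n \<in> A" using flip[of u] by blast
      then show "x \<in> A \<inter> {n..<2*n}" using u(2) \<open>u < n\<close> by simp
    qed
    have eqA: "A1 \<union> (A \<inter> {n..<2*n}) = A" unfolding A1_def using A by auto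
    have f1: "finite A1" "finite (A \<inter> {n..<2*n})" unfolding A1_def by auto
    have dj: "A1 \<inter> (A \<inter> {n..<2*n}) = {}" unfolding A1_def by auto
    have cU: "card A = card A1 + card (A \<inter> {n..<2*n})"
      using card_Un_disjoint[OF f1 dj] unfolding eqA .
    have c2: "card (A \<inter> {n..<2*n}) = card ({..<n} - A1)" unfolding A2 by (simp add: card_image)
    have A1s: "A1 \<subseteq> {..<n}" "finite A1" unfolding A1_def by auto
    have c3: "card ({..<n} - A1) = n - card A1" using card_Diff_subset[OF A1s(2) A1s(1)] by simp
    have c4: "card A1 \<le> n" using card_mono[of "{..<n}" A1] unfolding A1_def by auto
    have "card A = n" using cU c2 c3 c4 by linarith
    then show False using cA by simp
  qed
  then show "u < n \<Longrightarrow> (u \<in> A \<longleftrightarrow> u + n \<in> A)"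
  proof -
    assume d0: "d 0" and u: "u < n"
    have "d u" using c[of u] d0 u by simp
    moreover have "sh u = u + n" unfolding sh_def using u by simp
    ultimately show ?thesis unfolding d_def by simp
  qed
qed



definition runS :: "nat set \<Rightarrow> nat set" where
  "runS I = {s\<in>I. s = 0 \<or> s - 1 \<notin> I}"
definition runL :: "nat set \<Rightarrow> nat \<Rightarrow> nat" where
  "runL I s = (LEAST L. s + L \<notin> I)"
definition gr :: "nat set \<Rightarrow> (nat \<times> nat) set" where
  "gr I = (\<lambda>s. (s, runL I s)) ` runS I"

context
  fixes I :: "nat set" and n :: nat
  assumes In: "I \<subseteq> {..<n}"
begin

lemma runL_ex: "s < n \<Longrightarrow> s + (n - s) \<notin> I" using In by auto

lemma runL_out: "s < n \<Longrightarrow> s + runL I s \<notin> I"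
  unfolding runL_def by (rule LeastI[of "\<lambda>L. s + L \<notin> I" "n - s", OF runL_ex])

lemma runL_in: "L < runL I s \<Longrightarrow> s + L \<in> I"
  unfolding runL_def using not_less_Least by blast

lemma runL_le: "s < n \<Longrightarrow> runL I s \<le> n - s"
  unfolding runL_def by (rule Least_le[of "\<lambda>L. s + L \<notin> I" "n - s", OF runL_ex])

lemma runL_pos: "s \<in> I \<Longrightarrow> runL I s \<ge> 1"
proof (rule ccontr)
  assume "s \<in> I" "\<not> runL I s \<ge> 1"
  then have "runL I s = 0" by simp
  moreover have "s < n" using In \<open>s \<in> I\<close> by auto
  ultimately show False using runL_out[of s] \<open>s \<in> I\<close> by simp
qed

lemma runL_card: "s \<in> I \<Longrightarrow> runL I s \<le> card I"
proof -
  assume s: "s \<in> I"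
  have "{s..<s + runL I s} \<subseteq> I"
  proof
    fix i assume "i \<in> {s..<s + runL I s}"
    then have "i - s < runL I s" "s + (i - s) = i" by auto
    then show "i \<in> I" using runL_in by metis
  qed
  moreover have "finite I" using In finite_subset by blast
  ultimately have "card {s..<s + runL I s} \<le> card I" by (intro card_mono)
  then show ?thesis by simp
qed

lemma runS_sub: "runS I \<subseteq> I" unfolding runS_def by auto

lemma cover: "i \<in> I \<Longrightarrow> \<exists>s\<in>runS I. s \<le> i \<and> i < s + runL I s"
proof (induction i)
  case 0
  then have "0 \<in> runS I" unfolding runS_def by simp
  then show ?case using runL_pos[OF 0] by auto
next
  case (Suc i)
  show ?case
  proof (cases "i \<in> I")
    case True
    then obtain s where s: "s \<in> runS I" "s \<le> i" "i < s + runL I s" using Suc.IH by blast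
    have "s < n" using s(1) runS_sub In by auto
    have "Suc i \<noteq> s + runL I s" using runL_out[OF \<open>s < n\<close>] Suc.prems by metis
    then have "Suc i < s + runL I s" using s(3) by linarith
    moreover have "s \<le> Suc i" using s(2) by simp
    ultimately show ?thesis using s(1) by blast
  next
    case False
    then have "Suc i \<in> runS I" unfolding runS_def using Suc.prems by simp
    then show ?thesis using runL_pos[OF Suc.prems] by auto
  qed
qed

lemma I_recover: "I = (\<Union>p\<in>gr I. {fst p..<fst p + snd p})"
proof (intro equalityI subsetI)
  fix i assume "i \<in> I"
  then obtain s where "s \<in> runS I" "s \<le> i" "i < s + runL I s" using cover by blast
  then show "i \<in> (\<Union>p\<in>gr I. {fst p..<fst p + snd p})" unfolding gr_def by force
next
  fix i assume "i \<in> (\<Union>p\<in>gr I. {fst p..<fst p + snd p})"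
  then obtain s where "s \<in> runS I" "s \<le> i" "i < s + runL I s" unfolding gr_def by auto
  then have "i - s < runL I s" "s + (i - s) = i" by auto
  then show "i \<in> I" using runL_in by metis
qed

lemma end_inj: "inj_on (\<lambda>s. s + runL I s) (runS I)"
proof (rule inj_onI)
  have key: "False" if s: "s \<in> runS I" "s' \<in> runS I" "s < s'" "s + runL I s = s' + runL I s'" for s s'
  proof -
    have "s' - 1 \<notin> I" using s(2,3) unfolding runS_def by auto
    moreover have "s' - 1 - s < runL I s" using s(3,4) by linarith
    moreover have "s + (s' - 1 - s) = s' - 1" using s(3) by auto
    ultimately show False using runL_in by metis
  qed
  fix s s' assume "s \<in> runS I" "s' \<in> runS I" "s + runL I s = s' + runL I s'"
  then show "s = s'" using key[of s s'] key[of s' s] by (cases "s < s'"; cases "s' < s") auto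
qed

lemma gr_card: "card (gr I) = card (runS I)"
  unfolding gr_def by (rule card_image) (auto simp: inj_on_def)

lemma runS_card_le: "card (runS I) \<le> card I"
  using card_mono[OF _ runS_sub] In finite_subset by blast

end



definition SAB :: "nat \<Rightarrow> nat \<Rightarrow> (nat set \<times> nat set) set" where
  "SAB n k = {(A,B). A \<subseteq> {..<2*n} \<and> B \<subseteq> {..<n} \<and> evAB n A B \<and> card A + card B = k \<and> (A \<noteq> {} \<or> B \<noteq> {})}"

definition cAB :: "nat \<Rightarrow> nat \<Rightarrow> nat" where
  "cAB n k = card (SAB n k)"

lemma finite_SAB: "finite (SAB n k)"
proof -
  have "SAB n k \<subseteq> Pow {..<2*n} \<times> Pow {..<n}" unfolding SAB_def by auto
  then show ?thesis by (rule finite_subset) simp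
qed

lemma B_char:
  assumes n: "n \<ge> 1" and ev: "evAB n A B" and u: "u < n"
  shows "u \<in> B \<longleftrightarrow> odd (of_bool (u\<in>A) + of_bool (pv n u \<in> A) :: nat)"
proof -
  have "even (of_bool (u\<in>A) + of_bool (pv n u \<in> A) + of_bool (u mod n \<in> B) :: nat)"
    using ev u unfolding evAB_def by simp
  moreover have "u mod n = u" using u by simp
  ultimately show ?thesis by (cases "u \<in> B") auto
qed

lemma small_props:
  assumes n: "n \<ge> 2" and AB: "(A,B) \<in> SAB n k" and kn: "k < n"
  defines "I \<equiv> A \<inter> {..<n}"
  shows "A = I \<union> (\<lambda>u. u + n) ` I"
    and "B = {u. u < n \<and> odd (of_bool (u\<in>A) + of_bool (pv n u \<in> A) :: nat)}"
    and "card A = 2 * card I"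
    and "2 * card (runS I) \<le> card B + 2"
    and "3 \<le> k"
    and "gr I \<subseteq> {..<n} \<times> {1..k}"
    and "4 * card (gr I) \<le> k + 2"
proof -
  have A: "A \<subseteq> {..<2*n}" and B: "B \<subseteq> {..<n}" and ev: "evAB n A B" and k: "card A + card B = k"
    and ne: "A \<noteq> {} \<or> B \<noteq> {}" using AB unfolding SAB_def by auto
  have n1: "n \<ge> 1" using n by simp
  have In: "I \<subseteq> {..<n}" unfolding I_def by auto
  have cA: "card A < n" using k kn by simp
  have sh: "u < n \<Longrightarrow> (u \<in> A \<longleftrightarrow> u + n \<in> A)" for u using shift_inv[OF n1 ev A cA] by blast
  show Aeq: "A = I \<union> (\<lambda>u. u + n) ` I"
  proof (intro equalityI subsetI)
    fix x assume x: "x \<in> A"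
    show "x \<in> I \<union> (\<lambda>u. u + n) ` I"
    proof (cases "x < n")
      case True then show ?thesis using x unfolding I_def by simp
    next
      case False
      then have xn: "x - n < n" "x - n + n = x" using x A by auto
      then have "x - n \<in> I" using sh[of "x - n"] x unfolding I_def by simp
      then show ?thesis using xn(2) by (metis UnI2 image_eqI)
    qed
  next
    fix x assume "x \<in> I \<union> (\<lambda>u. u + n) ` I"
    then show "x \<in> A" unfolding I_def using sh by auto
  qed
  show Beq: "B = {u. u < n \<and> odd (of_bool (u\<in>A) + of_bool (pv n u \<in> A) :: nat)}"
    using B_char[OF n1 ev] B by auto
  have fI: "finite I" using In by (rule finite_subset) simp
  have dj: "I \<inter> (\<lambda>u. u + n) ` I = {}" using In by auto
  have "card A = card I + card ((\<lambda>u. u + n) ` I)"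
    using card_Un_disjoint[OF fI _ dj] fI Aeq by simp
  then show cAI: "card A = 2 * card I" by (simp add: card_image)
  have BI: "u \<in> B \<longleftrightarrow> odd (of_bool (u\<in>I) + of_bool (u - 1 \<in> I) :: nat)" if u: "1 \<le> u" "u < n" for u
  proof -
    have "u \<in> A \<longleftrightarrow> u \<in> I" using u unfolding I_def by simp
    moreover have "pv n u = u - 1" using u unfolding pv_def by simp
    moreover have "u - 1 \<in> A \<longleftrightarrow> u - 1 \<in> I" using u unfolding I_def by auto
    ultimately show ?thesis using B_char[OF n1 ev u(2)] by simp
  qed
  define S where "S = runS I"
  define S1 where "S1 = S - {0}"
  define S2 where "S2 = {s\<in>S. s + runL I s < n}"
  define E1 where "E1 = (\<lambda>s. s + runL I s) ` S2"
  have SI: "S \<subseteq> I" unfolding S_def by (rule runS_sub[OF In])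
  have fS: "finite S" using SI fI by (rule finite_subset)
  have S1B: "S1 \<subseteq> B"
  proof
    fix s assume "s \<in> S1"
    then have s: "s \<in> I" "s \<noteq> 0" "s - 1 \<notin> I" unfolding S1_def S_def runS_def by auto
    have "s < n" using s In by auto
    then show "s \<in> B" using BI[of s] s by simp
  qed
  have E1B: "E1 \<subseteq> B"
  proof
    fix e assume "e \<in> E1"
    then obtain s where s: "s \<in> S" "s + runL I s < n" "e = s + runL I s" unfolding E1_def S2_def by auto
    have sI: "s \<in> I" using s SI by auto
    have sn: "s < n" using sI In by auto
    have p: "runL I s \<ge> 1" using runL_pos[OF In sI] .
    have "e \<notin> I" using runL_out[OF In sn] s(3) by simp
    moreover have "e - 1 \<in> I"
    proof -
      have "runL I s - 1 < runL I s" using p by simp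
      then have "s + (runL I s - 1) \<in> I" by (rule runL_in[OF In])
      moreover have "s + (runL I s - 1) = e - 1" using s(3) p by simp
      ultimately show ?thesis by simp
    qed
    moreover have "1 \<le> e" "e < n" using s p by auto
    ultimately show "e \<in> B" using BI[of e] by simp
  qed
  have dj2: "S1 \<inter> E1 = {}"
  proof -
    have "E1 \<inter> I = {}"
    proof -
      have "s + runL I s \<notin> I" if "s \<in> S" for s using that SI In runL_out[OF In] by blast
      then show ?thesis unfolding E1_def S2_def by auto
    qed
    moreover have "S1 \<subseteq> I" using SI unfolding S1_def by auto
    ultimately show ?thesis by blast
  qed
  have cS1: "card S \<le> card S1 + 1"
  proof -
    have "S \<subseteq> insert 0 S1" unfolding S1_def by auto
    then have "card S \<le> card (insert 0 S1)" using fS by (intro card_mono) (auto simp: S1_def)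
    also have "\<dots> \<le> card S1 + 1" using fS by (simp add: card_insert_if S1_def, arith)
    finally show ?thesis .
  qed
  have cE1: "card S \<le> card E1 + 1"
  proof -
    have inj: "inj_on (\<lambda>s. s + runL I s) S" unfolding S_def by (rule end_inj[OF In])
    have cE: "card E1 = card S2" unfolding E1_def by (rule card_image) (rule inj_on_subset[OF inj], auto simp: S2_def)
    define S3 where "S3 = S - S2"
    have S3n: "s + runL I s = n" if "s \<in> S3" for s
    proof -
      have "s \<in> I" using that SI unfolding S3_def by auto
      then have "s < n" using In by auto
      then have "runL I s \<le> n - s" by (rule runL_le[OF In])
      then show ?thesis using that unfolding S3_def S2_def using \<open>s < n\<close> by auto
    qed
    have "card S3 \<le> 1"
    proof -
      have f3: "finite S3" using fS unfolding S3_def by auto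
      have "\<forall>x\<in>S3. \<forall>y\<in>S3. x = y"
      proof (intro ballI)
        fix x y assume xy: "x \<in> S3" "y \<in> S3"
        then have "x \<in> S" "y \<in> S" unfolding S3_def by auto
        moreover have "x + runL I x = y + runL I y" using S3n[OF xy(1)] S3n[OF xy(2)] by simp
        ultimately show "x = y" using inj unfolding inj_on_def by blast
      qed
      then show ?thesis using card_le_Suc0_iff_eq[OF f3] by simp
    qed
    moreover have "card S = card S2 + card S3"
    proof -
      have "S2 \<subseteq> S" unfolding S2_def by auto
      then have "S = S2 \<union> S3" "S2 \<inter> S3 = {}" unfolding S3_def by auto
      moreover have "finite S2" "finite S3" using fS unfolding S2_def S3_def by auto
      ultimately show ?thesis using card_Un_disjoint by metis
    qed
    ultimately show ?thesis using cE by simp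
  qed
  have fB: "finite B" using B by (rule finite_subset) simp
  have "card (S1 \<union> E1) \<le> card B" using S1B E1B fB by (intro card_mono) auto
  moreover have "card (S1 \<union> E1) = card S1 + card E1"
    using dj2 fS by (intro card_Un_disjoint) (auto simp: S1_def E1_def S2_def)
  ultimately show cB: "2 * card (runS I) \<le> card B + 2" using cS1 cE1 unfolding S_def by linarith
  have Ine: "I \<noteq> {}"
  proof
    assume "I = {}"
    then have "A = {}" using Aeq by simp
    moreover have "B = {}" using Beq \<open>A = {}\<close> by simp
    ultimately show False using ne by simp
  qed
  have Sne: "S \<noteq> {}"
  proof -
    obtain i where i: "i \<in> I" using Ine by blast
    obtain s where "s \<in> runS I" using cover[OF In i] by blast
    then show ?thesis unfolding S_def by blast
  qed
  have B1: "card B \<ge> 1"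
  proof -
    obtain s where s: "s \<in> S" using Sne by blast
    show ?thesis
    proof (cases "s = 0")
      case False
      then have "s \<in> S1" using s unfolding S1_def by simp
      then have "S1 \<noteq> {}" by blast
      then have "B \<noteq> {}" using S1B by blast
      then show ?thesis using fB by (simp add: Suc_le_eq card_gt_0_iff)
    next
      case True
      have sI: "s \<in> I" using s SI by auto
      have "s + runL I s < n"
      proof (rule ccontr)
        assume "\<not> s + runL I s < n"
        then have r: "runL I s = n" using True runL_le[OF In, of s] sI In by force
        have "{..<n} \<subseteq> I"
        proof
          fix i assume "i \<in> {..<n}"
          then have "i < runL I s" using r by simp
          then have "s + i \<in> I" by (rule runL_in[OF In])
          then show "i \<in> I" using True by simp
        qed
        then have "card {..<n} \<le> card I" using fI by (intro card_mono)
        then have "n \<le> card I" by simp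
        then show False using cA cAI by simp
      qed
      then have "s \<in> S2" using s unfolding S2_def by simp
      then have "E1 \<noteq> {}" unfolding E1_def by blast
      then have "B \<noteq> {}" using E1B by blast
      then show ?thesis using fB by (simp add: Suc_le_eq card_gt_0_iff)
    qed
  qed
  have cI1: "card I \<ge> 1" using Ine fI by (simp add: Suc_leI card_gt_0_iff)
  show "3 \<le> k" using k cAI cI1 B1 by linarith
  have cSI: "card S \<le> card I" unfolding S_def by (rule runS_card_le[OF In])
  show "4 * card (gr I) \<le> k + 2" using gr_card[OF In] cB cSI cAI k unfolding S_def by linarith
  show "gr I \<subseteq> {..<n} \<times> {1..k}"
  proof
    fix p assume "p \<in> gr I"
    then obtain s where s: "s \<in> runS I" "p = (s, runL I s)" unfolding gr_def by auto
    have sI: "s \<in> I" using s(1) runS_sub[OF In] by blast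
    have "runL I s \<ge> 1" using runL_pos[OF In sI] .
    moreover have "runL I s \<le> card I" using runL_card[OF In sI] .
    moreover have "card I \<le> k" using cAI k by simp
    moreover have "s < n" using sI In by auto
    ultimately show "p \<in> {..<n} \<times> {1..k}" using s(2) by simp
  qed
qed



lemma card_subsets_le:
  assumes "finite U"
  shows "card {G. G \<subseteq> U \<and> card G \<le> R} = (\<Sum>a\<le>R. card U choose a)"
proof -
  have eq: "{G. G \<subseteq> U \<and> card G \<le> R} = (\<Union>a\<in>{..R}. {G. G \<subseteq> U \<and> card G = a})" by auto
  have "card (\<Union>a\<in>{..R}. {G. G \<subseteq> U \<and> card G = a}) = (\<Sum>a\<le>R. card {G. G \<subseteq> U \<and> card G = a})"
  proof (rule card_UN_disjoint)
    show "\<forall>i\<in>{..R}. finite {G. G \<subseteq> U \<and> card G = i}"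
    proof
      fix i
      have "{G. G \<subseteq> U \<and> card G = i} \<subseteq> Pow U" by auto
      then show "finite {G. G \<subseteq> U \<and> card G = i}" using finite_subset assms by auto
    qed
  qed auto
  also have "\<dots> = (\<Sum>a\<le>R. card U choose a)" using n_subsets[OF assms] by simp
  finally show ?thesis unfolding eq .
qed

lemma cAB_small:
  assumes n: "n \<ge> 2" and kn: "k < n"
  shows "cAB n k \<le> (\<Sum>a\<le>(k+2) div 4. (n*k) choose a)"
proof -
  define U where "U = {..<n} \<times> {1..k}"
  define f where "f = (\<lambda>(A::nat set,B::nat set). gr (A \<inter> {..<n}))"
  have inj: "inj_on f (SAB n k)"
  proof (rule inj_onI)
    fix x y assume x: "x \<in> SAB n k" and y: "y \<in> SAB n k" and fxy: "f x = f y"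
    obtain A B where xe: "x = (A,B)" by (cases x)
    obtain A' B' where ye: "y = (A',B')" by (cases y)
    have x': "(A,B) \<in> SAB n k" "(A',B') \<in> SAB n k" using x y xe ye by auto
    have g: "gr (A \<inter> {..<n}) = gr (A' \<inter> {..<n})" using fxy xe ye unfolding f_def by simp
    have "A \<inter> {..<n} = A' \<inter> {..<n}"
      using I_recover[of "A \<inter> {..<n}" n] I_recover[of "A' \<inter> {..<n}" n] g by simp
    then have "A = A'" using small_props(1)[OF n x'(1) kn] small_props(1)[OF n x'(2) kn] by simp
    moreover have "B = B'" using small_props(2)[OF n x'(1) kn] small_props(2)[OF n x'(2) kn] \<open>A = A'\<close> by simp
    ultimately show "x = y" using xe ye by simp
  qed
  have img: "f ` SAB n k \<subseteq> {G. G \<subseteq> U \<and> card G \<le> (k+2) div 4}"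
  proof
    fix G assume "G \<in> f ` SAB n k"
    then obtain A B where AB: "(A,B) \<in> SAB n k" "G = gr (A \<inter> {..<n})" unfolding f_def by auto
    have "G \<subseteq> U" using small_props(6)[OF n AB(1) kn] AB(2) unfolding U_def by simp
    moreover have "4 * card G \<le> k + 2" using small_props(7)[OF n AB(1) kn] AB(2) by simp
    ultimately show "G \<in> {G. G \<subseteq> U \<and> card G \<le> (k+2) div 4}" by simp
  qed
  have fU: "finite U" unfolding U_def by simp
  have fin: "finite {G. G \<subseteq> U \<and> card G \<le> (k+2) div 4}"
  proof -
    have "{G. G \<subseteq> U \<and> card G \<le> (k+2) div 4} \<subseteq> Pow U" by auto
    then show ?thesis using finite_subset fU by auto
  qed
  have "cAB n k = card (f ` SAB n k)" unfolding cAB_def by (rule card_image[OF inj, symmetric])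
  also have "\<dots> \<le> card {G. G \<subseteq> U \<and> card G \<le> (k+2) div 4}" by (rule card_mono[OF fin img])
  also have "\<dots> = (\<Sum>a\<le>(k+2) div 4. card U choose a)" by (rule card_subsets_le[OF fU])
  also have "card U = n * k" unfolding U_def by simp
  finally show ?thesis .
qed

lemma cAB_tiny:
  assumes n: "n \<ge> 2" and kn: "k < n" and k: "k \<le> 2"
  shows "cAB n k = 0"
proof -
  have "SAB n k = {}"
  proof (rule ccontr)
    assume "SAB n k \<noteq> {}"
    then obtain A B where "(A,B) \<in> SAB n k" by auto
    then have "3 \<le> k" using small_props(5)[OF n _ kn] by blast
    then show False using k by simp
  qed
  then show ?thesis unfolding cAB_def by simp
qed

lemma cAB_big_zero:
  assumes n: "n \<ge> 1" and k: "k > 2*n"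
  shows "cAB n k = 0"
proof -
  have "SAB n k = {}"
  proof (rule ccontr)
    assume "SAB n k \<noteq> {}"
    then obtain A B where AB: "(A,B) \<in> SAB n k" by auto
    then have "card A + card B \<le> 2*n" using handshake(2)[OF n] unfolding SAB_def by blast
    then show False using AB k unfolding SAB_def by simp
  qed
  then show ?thesis unfolding cAB_def by simp
qed

lemma cAB_large:
  assumes n: "n \<ge> 1"
  shows "cAB n k \<le> 2 * (\<Sum>r\<le>k div 2. n choose r)"
proof -
  define f where "f = (\<lambda>(A::nat set,B::nat set). (B, 0 \<in> A))"
  define W where "W = {B. B \<subseteq> {..<n} \<and> card B \<le> k div 2}"
  have inj: "inj_on f (SAB n k)"
  proof (rule inj_onI)
    fix x y assume x: "x \<in> SAB n k" and y: "y \<in> SAB n k" and fxy: "f x = f y"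
    obtain A B where xe: "x = (A,B)" by (cases x)
    obtain A' B' where ye: "y = (A',B')" by (cases y)
    have h: "B = B'" "0 \<in> A \<longleftrightarrow> 0 \<in> A'" using fxy xe ye unfolding f_def by auto
    have a: "A \<subseteq> {..<2*n}" "A' \<subseteq> {..<2*n}" "evAB n A B" "evAB n A' B"
      using x y xe ye h(1) unfolding SAB_def by auto
    have "A' = A \<or> A' = {..<2*n} - A" using fiber[OF n a(3) a(4) a(1) a(2)] .
    moreover have "A' \<noteq> {..<2*n} - A"
    proof
      assume "A' = {..<2*n} - A"
      then have "0 \<in> A' \<longleftrightarrow> 0 \<notin> A" using n by auto
      then show False using h(2) by simp
    qed
    ultimately show "x = y" using xe ye h(1) by simp
  qed
  have img: "f ` SAB n k \<subseteq> W \<times> UNIV"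
  proof
    fix p assume "p \<in> f ` SAB n k"
    then obtain A B where AB: "(A,B) \<in> SAB n k" "p = (B, 0 \<in> A)" unfolding f_def by auto
    have "card B \<le> card A" "B \<subseteq> {..<n}" using handshake(1)[OF n] AB(1) unfolding SAB_def by auto
    moreover have "card A + card B = k" using AB(1) unfolding SAB_def by auto
    ultimately have "B \<in> W" unfolding W_def by auto
    then show "p \<in> W \<times> UNIV" using AB(2) by simp
  qed
  have fW: "finite W"
  proof -
    have "W \<subseteq> Pow {..<n}" unfolding W_def by auto
    then show ?thesis by (rule finite_subset) simp
  qed
  have "cAB n k = card (f ` SAB n k)" unfolding cAB_def by (rule card_image[OF inj, symmetric])
  also have "\<dots> \<le> card (W \<times> (UNIV :: bool set))" by (rule card_mono) (use fW img in auto)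
  also have "\<dots> = card W * 2" by (simp add: card_cartesian_product)
  also have "card W = (\<Sum>r\<le>k div 2. n choose r)" unfolding W_def using card_subsets_le[of "{..<n}" "k div 2"] by simp
  finally show ?thesis by simp
qed



lemma binom_step: "(k+1) * (N choose (k+1)) = (N - k) * (N choose k)"
proof (cases N)
  case 0 then show ?thesis by simp
next
  case (Suc M)
  have "(k+1) * (Suc M choose Suc k) = Suc M * (M choose k)" using Suc_times_binomial by simp
  moreover have "(Suc M - k) * (Suc M choose k) = Suc M * (M choose k)"
    using binomial_absorb_comp[of "Suc M" k] by simp
  ultimately show ?thesis using Suc by simp
qed

lemma binom_step_real: "real (N choose (k+1)) * (k+1) = real (N choose k) * (real N - real k)"
  if "k \<le> N"
proof -
  have "real ((k+1) * (N choose (k+1))) = real ((N - k) * (N choose k))" using binom_step by metis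
  then show ?thesis using that by (simp add: of_nat_diff algebra_simps)
qed

lemma binom_2n_3n: "real ((2*n) choose j) \<le> (2/3)^j * real ((3*n) choose j)"
proof (induction j)
  case 0 then show ?case by simp
next
  case (Suc j)
  show ?case
  proof (cases "j \<le> 2*n")
    case False
    then have "(2*n) choose (Suc j) = 0" by simp
    then have "real ((2*n) choose (Suc j)) = 0" by simp
    moreover have "0 \<le> (2/3)^(Suc j) * real ((3*n) choose (Suc j))" by simp
    ultimately show ?thesis by linarith
  next
    case True
    have a: "real ((2*n) choose (j+1)) * (j+1) = real ((2*n) choose j) * (real (2*n) - real j)"
      using binom_step_real True by blast
    have b: "real ((3*n) choose (j+1)) * (j+1) = real ((3*n) choose j) * (real (3*n) - real j)"
      using binom_step_real True by simp
    have nn: "real (2*n) - real j \<ge> 0" using True by simp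
    have c: "real (2*n) - real j \<le> (2/3) * (real (3*n) - real j)" by simp
    have "real ((2*n) choose (j+1)) * (j+1) \<le> (2/3)^j * real ((3*n) choose j) * (real (2*n) - real j)"
      unfolding a by (rule mult_right_mono[OF Suc.IH nn])
    also have "\<dots> \<le> (2/3)^j * real ((3*n) choose j) * ((2/3) * (real (3*n) - real j))"
      by (rule mult_left_mono[OF c]) simp
    also have "\<dots> = (2/3)^(j+1) * (real ((3*n) choose j) * (real (3*n) - real j))" by simp
    also have "\<dots> = (2/3)^(j+1) * real ((3*n) choose (j+1)) * (j+1)" unfolding b[symmetric] by simp
    finally show ?thesis by simp
  qed
qed

lemma binom_grow: "j \<le> k \<Longrightarrow> k \<le> n \<Longrightarrow> 2^(k-j) * real ((3*n) choose j) \<le> real ((3*n) choose k)"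
proof (induction k)
  case 0 then show ?case by simp
next
  case (Suc k)
  show ?case
  proof (cases "j = Suc k")
    case True then show ?thesis by simp
  next
    case False
    then have jk: "j \<le> k" "k \<le> n" using Suc.prems by auto
    have IH: "2^(k-j) * real ((3*n) choose j) \<le> real ((3*n) choose k)" using Suc.IH jk by blast
    have kN: "k \<le> 3*n" using jk by simp
    have b: "real ((3*n) choose (k+1)) * (k+1) = real ((3*n) choose k) * (real (3*n) - real k)"
      using binom_step_real kN by blast
    have c: "2 * (real k + 1) \<le> real (3*n) - real k" using Suc.prems by simp
    have "2^(Suc k - j) * real ((3*n) choose j) * (k+1) = 2 * (2^(k-j) * real ((3*n) choose j)) * (k+1)"
      using jk by (simp add: Suc_diff_le)
    also have "\<dots> \<le> 2 * real ((3*n) choose k) * (k+1)" using IH by simp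
    also have "\<dots> = real ((3*n) choose k) * (2 * (real k + 1))" by simp
    also have "\<dots> \<le> real ((3*n) choose k) * (real (3*n) - real k)" by (rule mult_left_mono[OF c]) simp
    also have "\<dots> = real ((3*n) choose (Suc k)) * (k+1)" using b by simp
    finally show ?thesis by simp
  qed
qed

lemma sq_sum_binom: "(\<Sum>r\<le>R. n choose r)^2 \<le> (\<Sum>k\<le>2*R. (2*n) choose k)"
proof -
  define a where "a r = n choose r" for r
  have "(\<Sum>r\<le>R. a r)^2 = (\<Sum>i\<le>R. \<Sum>j\<le>R. a i * a j)" by (simp add: power2_eq_square sum_product)
  also have "\<dots> = (\<Sum>(i,j)\<in>{..R} \<times> {..R}. a i * a j)" by (simp add: sum.cartesian_product)
  also have "\<dots> \<le> (\<Sum>(i,j)\<in>{(i,j). i + j \<le> 2*R}. a i * a j)"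
  proof (rule sum_mono2)
    have "{(i,j). i + j \<le> 2*R} \<subseteq> {..2*R} \<times> {..2*R}" by auto
    then show "finite {(i,j). i + j \<le> 2*R}" by (rule finite_subset) simp
    show "{..R} \<times> {..R} \<subseteq> {(i,j). i + j \<le> 2*R}" by auto
  qed auto
  also have "\<dots> = (\<Sum>k\<le>2*R. \<Sum>i\<le>k. a i * a (k - i))" by (rule sum.triangle_reindex_eq)
  also have "\<dots> = (\<Sum>k\<le>2*R. (2*n) choose k)"
    by (rule sum.cong[OF refl]) (simp add: a_def vandermonde mult_2)
  finally show ?thesis unfolding a_def .
qed



lemma g_sum: "(\<Sum>j\<le>k. (2/3::real)^j * (1/2)^(k-j)) \<le> 4 * (2/3)^k"
proof (induction k)
  case 0 then show ?case by simp
next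
  case (Suc k)
  have "(\<Sum>j\<le>Suc k. (2/3::real)^j * (1/2)^(Suc k-j)) = (\<Sum>j\<le>k. (2/3::real)^j * (1/2)^(Suc k-j)) + (2/3)^(Suc k)"
    by simp
  also have "(\<Sum>j\<le>k. (2/3::real)^j * (1/2)^(Suc k-j)) = (1/2) * (\<Sum>j\<le>k. (2/3::real)^j * (1/2)^(k-j))"
    by (simp add: sum_distrib_left Suc_diff_le mult_ac)
  finally have "(\<Sum>j\<le>Suc k. (2/3::real)^j * (1/2)^(Suc k-j)) \<le> (1/2) * (4 * (2/3)^k) + (2/3)^(Suc k)"
    using Suc.IH by linarith
  also have "\<dots> = 4 * (2/3)^(Suc k)" by simp
  finally show ?case .
qed

lemma term_mid:
  assumes kn: "k \<le> n" and c: "c \<le> 2 * (\<Sum>r\<le>k div 2. n choose r)"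
  shows "real c ^ 2 / real ((3*n) choose k) \<le> 16 * (2/3)^k"
proof -
  have pos: "real ((3*n) choose k) > 0" using kn by simp
  have "c ^ 2 \<le> (2 * (\<Sum>r\<le>k div 2. n choose r))^2" using c by (rule power_mono) simp
  then have "real (c ^ 2) \<le> real ((2 * (\<Sum>r\<le>k div 2. n choose r))^2)" by (simp only: of_nat_le_iff)
  then have "real c ^ 2 \<le> real ((2 * (\<Sum>r\<le>k div 2. n choose r))^2)" by simp
  also have "\<dots> = 4 * real ((\<Sum>r\<le>k div 2. n choose r)^2)" by (simp add: power_mult_distrib)
  also have "\<dots> \<le> 4 * real (\<Sum>j\<le>2*(k div 2). (2*n) choose j)"
    using sq_sum_binom[of n "k div 2"] by (simp only: of_nat_le_iff mult_le_cancel_left) simp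
  also have "\<dots> \<le> 4 * real (\<Sum>j\<le>k. (2*n) choose j)"
    by (intro mult_left_mono of_nat_mono sum_mono2) auto
  also have "\<dots> = 4 * (\<Sum>j\<le>k. real ((2*n) choose j))" by simp
  also have "\<dots> \<le> 4 * (\<Sum>j\<le>k. (2/3)^j * ((1/2)^(k-j) * real ((3*n) choose k)))"
  proof (intro mult_left_mono sum_mono)
    fix j assume "j \<in> {..k}"
    then have j: "j \<le> k" by simp
    have "2^(k-j) * real ((3*n) choose j) \<le> real ((3*n) choose k)" using binom_grow[OF j kn] .
    then have "real ((3*n) choose j) \<le> (1/2)^(k-j) * real ((3*n) choose k)"
      by (simp add: field_simps power_divide)
    then show "real ((2*n) choose j) \<le> (2/3)^j * ((1/2)^(k-j) * real ((3*n) choose k))"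
      using binom_2n_3n[of n j] by (meson mult_left_mono order_trans zero_le_divide_iff zero_le_numeral zero_le_power)
  qed simp
  also have "\<dots> = 4 * real ((3*n) choose k) * (\<Sum>j\<le>k. (2/3::real)^j * (1/2)^(k-j))"
    by (simp add: sum_distrib_left sum_distrib_right mult_ac)
  also have "\<dots> \<le> 4 * real ((3*n) choose k) * (4 * (2/3)^k)"
    by (rule mult_left_mono[OF g_sum]) simp
  finally have "real c ^ 2 \<le> 16 * (2/3)^k * real ((3*n) choose k)" by (simp add: mult_ac)
  then show ?thesis using pos by (simp add: divide_le_eq mult_ac)
qed

lemma binom3_step: "real ((3*n+3) choose (n+1)) * ((2*n+1) * (2*n+2) * (n+1)) =
    real ((3*n) choose n) * ((3*n+1) * (3*n+2) * (3*n+3))"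
proof -
  have e1: "real (2*n+1) * real ((3*n+1) choose n) = real (3*n+1) * real ((3*n) choose n)"
  proof -
    have h1: "3*n+1-n = 2*n+1" "3*n+1-1 = 3*n" by simp_all
    from binomial_absorb_comp[of "3*n+1" n] have "(2*n+1) * ((3*n+1) choose n) = (3*n+1) * ((3*n) choose n)"
      unfolding h1 .
    then show ?thesis by (metis of_nat_mult)
  qed
  have e2: "real (2*n+2) * real ((3*n+2) choose n) = real (3*n+2) * real ((3*n+1) choose n)"
  proof -
    have h1: "3*n+2-n = 2*n+2" "3*n+2-1 = 3*n+1" by simp_all
    from binomial_absorb_comp[of "3*n+2" n] have "(2*n+2) * ((3*n+2) choose n) = (3*n+2) * ((3*n+1) choose n)"
      unfolding h1 .
    then show ?thesis by (metis of_nat_mult)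
  qed
  have e3: "real (2*n+3) * real ((3*n+3) choose n) = real (3*n+3) * real ((3*n+2) choose n)"
  proof -
    have h1: "3*n+3-n = 2*n+3" "3*n+3-1 = 3*n+2" by simp_all
    from binomial_absorb_comp[of "3*n+3" n] have "(2*n+3) * ((3*n+3) choose n) = (3*n+3) * ((3*n+2) choose n)"
      unfolding h1 .
    then show ?thesis by (metis of_nat_mult)
  qed
  have e4: "real ((3*n+3) choose (n+1)) * (n+1) = real ((3*n+3) choose n) * (real (3*n+3) - real n)"
    using binom_step_real[of n "3*n+3"] by simp
  have "real ((3*n+3) choose (n+1)) * ((2*n+1) * (2*n+2) * (n+1))
      = (real (2*n+1) * real (2*n+2)) * (real ((3*n+3) choose (n+1)) * (n+1))" by (simp add: algebra_simps)
  also have "\<dots> = (real (2*n+1) * real (2*n+2)) * (real ((3*n+3) choose n) * real (2*n+3))"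
    unfolding e4 by simp
  also have "\<dots> = real (2*n+1) * (real (2*n+2) * (real (2*n+3) * real ((3*n+3) choose n)))" by (simp add: algebra_simps)
  also have "\<dots> = real (2*n+1) * (real (2*n+2) * (real (3*n+3) * real ((3*n+2) choose n)))" unfolding e3 ..
  also have "\<dots> = real (3*n+3) * (real (2*n+1) * (real (2*n+2) * real ((3*n+2) choose n)))" by (simp add: algebra_simps)
  also have "\<dots> = real (3*n+3) * (real (2*n+1) * (real (3*n+2) * real ((3*n+1) choose n)))" unfolding e2 ..
  also have "\<dots> = real (3*n+3) * real (3*n+2) * (real (2*n+1) * real ((3*n+1) choose n))" by (simp add: algebra_simps)
  also have "\<dots> = real (3*n+3) * real (3*n+2) * (real (3*n+1) * real ((3*n) choose n))" unfolding e1 ..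
  finally show ?thesis by (simp add: algebra_simps)
qed

lemma binom3_lower: "n \<ge> 1 \<Longrightarrow> real ((3*n) choose n) \<ge> 3 * 5^(n-1)"
proof (induction n rule: dec_induct[of 1])
  case base then show ?case by simp
next
  case (step m)
  have m: "m \<ge> 1" using step by simp
  define P where "P = (2*real m+1)*(2*real m+2)*(real m+1)"
  define Q where "Q = (3*real m+1)*(3*real m+2)*(3*real m+3)"
  have st: "real ((3*m+3) choose (m+1)) * P = real ((3*m) choose m) * Q"
    using binom3_step[of m] unfolding P_def Q_def by (simp add: algebra_simps)
  have PQ: "5 * P \<le> Q"
  proof -
    have "0 \<le> (real m - 1) * (7 * real m + 4) * (real m + 1)" using m by (intro mult_nonneg_nonneg) auto
    then show ?thesis unfolding P_def Q_def by (simp add: algebra_simps)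
  qed
  have Ppos: "P > 0" unfolding P_def by simp
  have "real ((3*m+3) choose (m+1)) * P \<ge> (5 * real ((3*m) choose m)) * P"
    unfolding st using mult_left_mono[OF PQ, of "real ((3*m) choose m)"] by (simp add: mult_ac)
  then have "real ((3*m+3) choose (m+1)) \<ge> 5 * real ((3*m) choose m)" using Ppos by simp
  moreover have "5 * real ((3*m) choose m) \<ge> 5 * (3 * 5^(m-1))" using step.IH by simp
  moreover have "(5::real) * (3 * 5^(m-1)) = 3 * 5^(Suc m - 1)" using m by (cases m) auto
  ultimately show ?case by (simp add: algebra_simps)
qed



lemma choose_le_pow': "real (M choose a) \<le> real M ^ a"
proof (cases "a \<le> M")
  case True then show ?thesis using binomial_le_pow[OF True] by (metis of_nat_le_iff of_nat_power)
next
  case False then show ?thesis by (simp add: binomial_eq_0)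
qed

lemma sum_choose_le: "M \<ge> 1 \<Longrightarrow> real (\<Sum>a\<le>A. M choose a) \<le> (A+1) * real M ^ A"
proof -
  assume M: "M \<ge> 1"
  have "real (\<Sum>a\<le>A. M choose a) = (\<Sum>a\<le>A. real (M choose a))" by simp
  also have "\<dots> \<le> (\<Sum>a\<le>A. real M ^ A)"
  proof (rule sum_mono)
    fix a assume "a \<in> {..A}"
    then have "real M ^ a \<le> real M ^ A" using M by (intro power_increasing) auto
    then show "real (M choose a) \<le> real M ^ A" using choose_le_pow'[of M a] by linarith
  qed
  also have "\<dots> = (A+1) * real M ^ A" by simp
  finally show ?thesis by (simp add: add.commute)
qed

lemma binom_lower_nk:
  assumes "1 \<le> n" "1 \<le> k" "k \<le> 3*n"
  shows "(real n / real k)^k \<le> real ((3*n) choose k)"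
proof -
  have "(real n / real k)^k \<le> (real (3*n) / real k)^k"
    using assms by (intro power_mono divide_right_mono) auto
  also have "\<dots> \<le> real ((3*n) choose k)" using binomial_ge_n_over_k_pow_k[OF assms(3)] by simp
  finally show ?thesis .
qed

lemma term_small:
  fixes K :: nat
  assumes n: "n \<ge> 1" and k5: "5 \<le> k" and kK: "k \<le> K" and k3: "k \<le> 3*n"
    and c: "c \<le> (\<Sum>a\<le>(k+2) div 4. (n*k) choose a)"
  shows "real c ^ 2 / real ((3*n) choose k) \<le> (real K+1)^2 * real n * ((real K+1)^2 / sqrt (real n))^k"
proof -
  define A where "A = (k+2) div 4"
  define s where "s = sqrt (real n)"
  have s1: "s \<ge> 1" unfolding s_def using n by simp
  have sn: "s^2 = real n" unfolding s_def by simp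
  have M: "n * k \<ge> 1" using n k5 by simp
  have c0: "real c \<le> real (\<Sum>a\<le>A. (n*k) choose a)" using c unfolding A_def by (simp only: of_nat_le_iff)
  have cb: "real c \<le> (real A + 1) * real (n*k) ^ A"
    using order_trans[OF c0 sum_choose_le[OF M, of A]] by simp
  have c2: "real c ^ 2 \<le> ((real A + 1) * real (n*k) ^ A)^2" using cb by (intro power_mono) auto
  have Cpos: "(real n / real k)^k > 0" using n k5 by simp
  have Cb: "(real n / real k)^k \<le> real ((3*n) choose k)" using binom_lower_nk[OF n _ k3] k5 by simp
  have "real c ^ 2 / real ((3*n) choose k) \<le> ((real A + 1) * real (n*k) ^ A)^2 / (real n / real k)^k"
    by (rule frac_le[OF _ c2 Cpos Cb]) simp
  also have "\<dots> = (real A + 1)^2 * (real n ^ (2*A) / real n ^ k) * real k ^ (2*A + k)"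
  proof -
    have e1: "((real A + 1) * real (n*k) ^ A)^2 = (real A + 1)^2 * (real n ^ (2*A) * real k ^ (2*A))"
      by (simp add: power_mult_distrib power_mult[symmetric] mult.commute)
    have e2: "real k ^ (2*A + k) = real k ^ (2*A) * real k ^ k" by (simp add: power_add)
    show ?thesis unfolding e1 e2 by (simp add: power_divide)
  qed
  also have "\<dots> \<le> (real K+1)^2 * (real n / s ^ k) * ((real K+1)^2)^k"
  proof (intro mult_mono)
    show "(real A + 1)^2 \<le> (real K + 1)^2" using kK k5 unfolding A_def by (intro power_mono) auto
    show "real n ^ (2*A) / real n ^ k \<le> real n / s ^ k"
    proof -
      have "real n ^ (2*A) = s ^ (4*A)" by (simp add: sn[symmetric] power_mult[symmetric] mult_ac)
      also have "\<dots> \<le> s ^ (k + 2)" using s1 unfolding A_def by (intro power_increasing) auto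
      finally have a: "real n ^ (2*A) \<le> s ^ (k+2)" .
      have b: "real n ^ k = s^k * s^k" by (simp add: sn[symmetric] power_mult[symmetric] power_add[symmetric] mult_2[symmetric] mult_ac)
      have spos: "s^k > 0" using s1 by simp
      have "real n ^ (2*A) / real n ^ k \<le> s ^ (k+2) / (s^k * s^k)"
        unfolding b by (rule divide_right_mono[OF a]) (use spos in simp)
      also have "\<dots> = real n / s ^ k" using spos by (simp add: power_add sn[symmetric] field_simps power2_eq_square)
      finally show ?thesis .
    qed
    show "real k ^ (2*A + k) \<le> ((real K + 1)^2)^k"
    proof -
      have "real k ^ (2*A + k) \<le> real k ^ (2*k)" using k5 unfolding A_def by (intro power_increasing) auto
      also have "\<dots> \<le> (real K + 1) ^ (2*k)" using kK by (intro power_mono) auto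
      also have "\<dots> = ((real K + 1)^2)^k" by (simp add: power_mult)
      finally show ?thesis .
    qed
  qed (use s1 n in auto)
  also have "\<dots> = (real K+1)^2 * real n * ((real K+1)^2 / s)^k" by (simp add: power_divide)
  finally show ?thesis unfolding s_def by simp
qed

lemma term34:
  assumes n: "n \<ge> 1" and k: "k = 3 \<or> k = 4" and k3: "k \<le> 3*n"
    and c: "c \<le> (\<Sum>a\<le>(k+2) div 4. (n*k) choose a)"
  shows "real c ^ 2 / real ((3*n) choose k) \<le> (1 + real n * real k)^2 * (real k / (3 * real n))^k"
proof -
  have A: "(k+2) div 4 = 1" using k by auto
  have "c \<le> 1 + n*k" using c unfolding A by simp
  then have c2: "real c ^ 2 \<le> (1 + real n * real k)^2" by (metis of_nat_1 of_nat_add of_nat_le_iff of_nat_mult power_mono of_nat_0_le_iff)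
  have Cpos: "(real (3*n) / real k)^k > 0" using n k by auto
  have Cb: "(real (3*n) / real k)^k \<le> real ((3*n) choose k)" using binomial_ge_n_over_k_pow_k[OF k3] by simp
  have "real c ^ 2 / real ((3*n) choose k) \<le> (1 + real n * real k)^2 / (real (3*n) / real k)^k"
    by (rule frac_le[OF _ c2 Cpos Cb]) simp
  also have "\<dots> = (1 + real n * real k)^2 * (real k / (3 * real n))^k" by (simp add: power_divide field_simps)
  finally show ?thesis .
qed

lemma geo_tail:
  fixes x :: real
  assumes "0 \<le> x" "x < 1"
  shows "(\<Sum>k\<le>M. if m \<le> k then x^k else 0) \<le> x^m / (1 - x)"
proof -
  have "(\<Sum>k\<le>M. if m \<le> k then x^k else 0) = (\<Sum>k\<in>{m..M}. x^k)"
    by (subst sum.inter_filter[symmetric]) (auto intro: sum.cong)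
  also have "\<dots> \<le> (\<Sum>k\<in>{m..<m+M+1}. x^k)" using assms by (intro sum_mono2) auto
  also have "\<dots> = (\<Sum>j\<in>{0..<M+1}. x^(j+m))"
    using sum.atLeastLessThan_shift_bounds[of "\<lambda>k. x^k" 0 m "M+1"] by (simp add: comp_def add.commute)
  also have "\<dots> = x^m * (\<Sum>j<M+1. x^j)"
    unfolding atLeast0LessThan sum_distrib_left by (rule sum.cong) (simp_all add: power_add mult.commute)
  also have "\<dots> = x^m * ((1 - x^(M+1)) / (1 - x))"
  proof -
    have "(\<Sum>j<M+1. x^j) = (1 - x^(M+1)) / (1 - x)"
      using sum_gp_strict[of x "M+1"] assms by (simp del: sum.lessThan_Suc)
    then show ?thesis by simp
  qed
  also have "\<dots> \<le> x^m * (1 / (1 - x))" using assms by (intro mult_left_mono divide_right_mono) auto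
  finally show ?thesis by simp
qed

lemma binom_3n_mid:
  assumes "n \<le> k" "k \<le> 2*n"
  shows "(3*n) choose n \<le> (3*n) choose k"
proof (cases "2*k \<le> 3*n")
  case True then show ?thesis by (rule binomial_mono[OF assms(1)])
next
  case False
  then have "(3*n) choose (2*n) \<le> (3*n) choose k" using assms by (intro binomial_antimono) auto
  moreover have "(3*n) choose (2*n) = (3*n) choose n" using binomial_symmetric[of n "3*n"] by simp
  ultimately show ?thesis by simp
qed

lemma term_big:
  assumes n: "n \<ge> 1" and k: "n \<le> k" "k \<le> 2*n" and c: "real c \<le> 2 * 2^n"
  shows "real c ^ 2 / real ((3*n) choose k) \<le> 4 * 4^n / (3 * 5^(n-1))"
proof -
  have L: "3 * 5^(n-1) \<le> real ((3*n) choose n)" using binom3_lower[OF n] .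
  have "real ((3*n) choose n) \<le> real ((3*n) choose k)" using binom_3n_mid[OF k] by simp
  then have C: "3 * 5^(n-1) \<le> real ((3*n) choose k)" using L by linarith
  have "real c ^ 2 \<le> (2 * 2^n)^2" using c by (intro power_mono) auto
  also have "\<dots> = 4 * 4^n"
  proof -
    have "(4::real)^n = 2^(2*n)" by (simp add: power_mult)
    then show ?thesis by (simp add: power_mult_distrib power_mult[symmetric] mult.commute)
  qed
  finally have c2: "real c ^ 2 \<le> 4 * 4^n" .
  show ?thesis by (rule frac_le[OF _ c2 _ C]) auto
qed



lemma cntT_le:
  assumes n: "n \<ge> 2"
  shows "cntT n k \<le> cAB n k"
proof -
  define f where "f = (\<lambda>X. (Aof n X, Bof n X))"
  have inj: "inj_on f {Y \<in> Tset n. card Y = k}"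
    using X_inj[OF n] unfolding inj_on_def f_def Tset_def by auto
  have img: "f ` {Y \<in> Tset n. card Y = k} \<subseteq> SAB n k"
  proof
    fix p assume "p \<in> f ` {Y \<in> Tset n. card Y = k}"
    then obtain X where X: "X \<subseteq> Gn_edges n" "X \<noteq> {}" "evenG n X" "card X = k" "p = f X"
      unfolding Tset_def by auto
    have "evAB n (Aof n X) (Bof n X)" using evenG_iff[OF n X(1)] X(3) by simp
    moreover have "card (Aof n X) + card (Bof n X) = k" using card_X[OF n X(1)] X(4) by simp
    moreover have "Aof n X \<noteq> {} \<or> Bof n X \<noteq> {}" using X_decomp[OF n X(1)] X(2) by auto
    moreover have "Aof n X \<subseteq> {..<2*n}" "Bof n X \<subseteq> {..<n}" unfolding Aof_def Bof_def by auto
    ultimately show "p \<in> SAB n k" unfolding SAB_def X(5) f_def by simp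
  qed
  have "cntT n k = card (f ` {Y \<in> Tset n. card Y = k})" unfolding cntT_def by (rule card_image[OF inj, symmetric])
  also have "\<dots> \<le> cAB n k" unfolding cAB_def by (rule card_mono[OF finite_SAB img])
  finally show ?thesis .
qed

lemma sum_choose_pow2: "(\<Sum>r\<le>R. n choose r) \<le> 2^n"
proof -
  have "(\<Sum>r\<le>R. n choose r) = card {G. G \<subseteq> {..<n} \<and> card G \<le> R}"
    using card_subsets_le[of "{..<n}" R] by simp
  also have "\<dots> \<le> card (Pow {..<n})" by (rule card_mono) auto
  also have "\<dots> = 2^n" by (simp add: card_Pow)
  finally show ?thesis .
qed

definition u :: "nat \<Rightarrow> nat \<Rightarrow> nat \<Rightarrow> real" where
  "u n K k = (if k = 3 \<or> k = 4 then (1 + real n * real k)^2 * (real k / (3 * real n))^k else 0)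
          + (if 5 \<le> k \<and> k < K then (real K+1)^2 * real n * ((real K+1)^2 / sqrt (real n))^k else 0)
          + (if K \<le> k then 16 * (2/3)^k else 0)
          + (if n \<le> k \<and> k \<le> 2*n then 4 * 4^n / (3 * 5^(n-1)) else 0)"

lemma u_nonneg: "u n K k \<ge> 0"
  unfolding u_def by (intro add_nonneg_nonneg) auto

lemma term_k:
  assumes n: "n \<ge> 5" and k3: "k \<le> 3*n"
  shows "real (cAB n k)^2 / real ((3*n) choose k) \<le> u n K k"
proof -
  define t where "t = real (cAB n k)^2 / real ((3*n) choose k)"
  have n1: "n \<ge> 1" "n \<ge> 2" using n by auto
  have u0: "(if k = 3 \<or> k = 4 then (1 + real n * real k)^2 * (real k / (3 * real n))^k else 0) \<ge> 0"
    "(if 5 \<le> k \<and> k < K then (real K+1)^2 * real n * ((real K+1)^2 / sqrt (real n))^k else 0) \<ge> 0"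
    "(if K \<le> k then 16 * (2/3::real)^k else 0) \<ge> 0"
    "(if n \<le> k \<and> k \<le> 2*n then 4 * 4^n / (3 * 5^(n-1)) else (0::real)) \<ge> 0" by auto
  have "t \<le> u n K k"
  proof (cases "k > 2*n")
    case True
    then have "t = 0" unfolding t_def using cAB_big_zero[OF n1(1) True] by simp
    then show ?thesis using u_nonneg by simp
  next
    case False
    show ?thesis
    proof (cases "n \<le> k")
      case True
      have "real (cAB n k) \<le> real (2 * (\<Sum>r\<le>k div 2. n choose r))" using cAB_large[OF n1(1), of k] by (simp only: of_nat_le_iff)
      also have "\<dots> \<le> real (2 * 2^n)"
        using sum_choose_pow2[of n "k div 2"] by (simp only: of_nat_le_iff)
      also have "\<dots> = 2 * 2^n" by simp
      finally have "t \<le> 4 * 4^n / (3 * 5^(n-1))" unfolding t_def using term_big[OF n1(1) True] False by simp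
      then show ?thesis unfolding u_def using u0 True False by auto
    next
      case kn: False
      then have kn: "k < n" by simp
      show ?thesis
      proof (cases "k \<le> 2")
        case True
        then have "t = 0" unfolding t_def using cAB_tiny[OF n1(2) kn True] by simp
        then show ?thesis using u_nonneg by simp
      next
        case k2: False
        show ?thesis
        proof (cases "k = 3 \<or> k = 4")
          case True
          have "t \<le> (1 + real n * real k)^2 * (real k / (3 * real n))^k"
            unfolding t_def by (rule term34[OF n1(1) True k3 cAB_small[OF n1(2) kn]])
          then show ?thesis unfolding u_def using u0 True by auto
        next
          case k34: False
          show ?thesis
          proof (cases "k < K")
            case True
            have k5: "5 \<le> k" using k2 k34 by simp
            have "t \<le> (real K+1)^2 * real n * ((real K+1)^2 / sqrt (real n))^k"
              unfolding t_def by (rule term_small[OF n1(1) k5 _ k3 cAB_small[OF n1(2) kn]]) (use True in simp)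
            then show ?thesis unfolding u_def using u0 True k5 by auto
          next
            case False
            have "t \<le> 16 * (2/3)^k" unfolding t_def by (rule term_mid) (use kn cAB_large[OF n1(1)] in auto)
            then show ?thesis unfolding u_def using u0 False k34 by auto
          qed
        qed
      qed
    qed
  qed
  then show ?thesis unfolding t_def .
qed



lemma sum_ind:
  fixes f :: "nat \<Rightarrow> real"
  assumes "4 \<le> M"
  shows "(\<Sum>k\<le>M. if k = 3 \<or> k = 4 then f k else 0) = f 3 + f 4"
proof -
  have "(\<Sum>k\<le>M. if k = 3 \<or> k = 4 then f k else 0) = (\<Sum>k\<in>{k\<in>{..M}. k = 3 \<or> k = 4}. f k)"
    by (rule sum.inter_filter[symmetric]) simp
  also have "{k\<in>{..M}. k = 3 \<or> k = 4} = {3,4}" using assms by auto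
  finally show ?thesis by simp
qed

lemma sum_u_bound:
  fixes K :: nat
  assumes n: "n \<ge> 5" and rho: "(real K+1)^2 / sqrt (real n) \<le> 1/2"
  defines "\<rho> \<equiv> (real K+1)^2 / sqrt (real n)"
  shows "(\<Sum>k\<le>3*n. u n K k) \<le>
      (1 + real n * 3)^2 * (3 / (3 * real n))^3 + (1 + real n * 4)^2 * (4 / (3 * real n))^4
      + 2 * ((real K+1)^2 * real n * \<rho>^5) + 48 * (2/3)^K + (3 * real n + 1) * (4 * 4^n / (3 * 5^(n-1)))"
proof -
  define a where "a k = (if k = 3 \<or> k = 4 then (1 + real n * real k)^2 * (real k / (3 * real n))^k else 0)" for k
  define b where "b k = (if 5 \<le> k \<and> k < K then (real K+1)^2 * real n * \<rho>^k else 0)" for k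
  define c where "c k = (if K \<le> k then 16 * (2/3::real)^k else 0)" for k
  define d where "d k = (if n \<le> k \<and> k \<le> 2*n then 4 * 4^n / (3 * 5^(n-1)) else (0::real))" for k
  have ueq: "u n K k = a k + b k + c k + d k" for k unfolding u_def a_def b_def c_def d_def \<rho>_def by simp
  have r00: "0 \<le> \<rho>" unfolding \<rho>_def by simp
  have r1: "\<rho> \<le> 1/2" using rho unfolding \<rho>_def .
  have r0: "0 \<le> \<rho>" "\<rho> < 1" using r00 r1 by auto
  have sa: "(\<Sum>k\<le>3*n. a k) = (1 + real n * 3)^2 * (3 / (3 * real n))^3 + (1 + real n * 4)^2 * (4 / (3 * real n))^4"
    unfolding a_def using sum_ind[of "3*n" "\<lambda>k. (1 + real n * real k)^2 * (real k / (3 * real n))^k"] n by simp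
  have sb: "(\<Sum>k\<le>3*n. b k) \<le> 2 * ((real K+1)^2 * real n * \<rho>^5)"
  proof -
    have "(\<Sum>k\<le>3*n. b k) \<le> (\<Sum>k\<le>3*n. (real K+1)^2 * real n * (if 5 \<le> k then \<rho>^k else 0))"
      unfolding b_def by (intro sum_mono) (use r0 in auto)
    also have "\<dots> = (real K+1)^2 * real n * (\<Sum>k\<le>3*n. if 5 \<le> k then \<rho>^k else 0)" by (simp add: sum_distrib_left)
    also have "\<dots> \<le> (real K+1)^2 * real n * (\<rho>^5 / (1 - \<rho>))"
      by (intro mult_left_mono geo_tail r0) auto
    also have "\<dots> \<le> (real K+1)^2 * real n * (2 * \<rho>^5)"
    proof (intro mult_left_mono)
      have "1 - \<rho> \<ge> 1/2" using r1 by simp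
      have "0 \<le> \<rho>^5 * (1 - 2*\<rho>)" using r0 r1 by (intro mult_nonneg_nonneg) auto
      then have h: "\<rho>^5 \<le> (2 * \<rho>^5) * (1 - \<rho>)" by (simp add: algebra_simps)
      have "1 - \<rho> > 0" using r0 by simp
      then show "\<rho>^5 / (1 - \<rho>) \<le> 2 * \<rho>^5" using h by (simp add: pos_divide_le_eq)
    qed auto
    finally show ?thesis by simp
  qed
  have sc: "(\<Sum>k\<le>3*n. c k) \<le> 48 * (2/3)^K"
  proof -
    have "(\<Sum>k\<le>3*n. c k) = 16 * (\<Sum>k\<le>3*n. if K \<le> k then (2/3::real)^k else 0)"
      unfolding c_def sum_distrib_left by (rule sum.cong) auto
    also have "\<dots> \<le> 16 * ((2/3)^K / (1 - 2/3))" by (intro mult_left_mono geo_tail) auto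
    finally show ?thesis by simp
  qed
  have sd: "(\<Sum>k\<le>3*n. d k) \<le> (3 * real n + 1) * (4 * 4^n / (3 * 5^(n-1)))"
  proof -
    have "(\<Sum>k\<le>3*n. d k) \<le> (\<Sum>k\<le>3*n. 4 * 4^n / (3 * 5^(n-1)))"
      unfolding d_def by (intro sum_mono) auto
    also have "\<dots> = (3 * real n + 1) * (4 * 4^n / (3 * 5^(n-1)))" by simp
    finally show ?thesis .
  qed
  have "(\<Sum>k\<le>3*n. u n K k) = (\<Sum>k\<le>3*n. a k) + (\<Sum>k\<le>3*n. b k) + (\<Sum>k\<le>3*n. c k) + (\<Sum>k\<le>3*n. d k)"
    unfolding ueq by (simp add: sum.distrib)
  then show ?thesis using sa sb sc sd by linarith
qed

lemma ln23: "ln (2/3::real) \<le> -1/3"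
proof -
  have "2/3 \<le> exp (-1/3::real)" using exp_ge_add_one_self[of "-1/3::real"] by simp
  then have "ln (2/3::real) \<le> ln (exp (-1/3))" by (subst ln_le_cancel_iff) auto
  then show ?thesis by simp
qed

lemma pow23:
  assumes n: "n \<ge> 1" and K: "real K \<ge> 3 * ln (real n)"
  shows "(2/3::real)^K \<le> 1 / real n"
proof -
  have "exp (real K * ln (2/3)) = (2/3::real)^K" by (simp add: exp_of_nat_mult)
  then have "(2/3::real)^K = exp (real K * ln (2/3))" by simp
  also have "\<dots> \<le> exp (3 * ln (real n) * (-1/3))"
  proof (rule exp_le_cancel_iff[THEN iffD2])
    have "real K * ln (2/3) \<le> real K * (-1/3)" using ln23 by (intro mult_left_mono) auto
    also have "\<dots> \<le> 3 * ln (real n) * (-1/3)" using K by simp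
    finally show "real K * ln (2/3) \<le> 3 * ln (real n) * (-1/3)" .
  qed
  also have "\<dots> = 1 / real n" using n by (simp add: exp_minus exp_ln inverse_eq_divide)
  finally show ?thesis .
qed



theorem mainTheorem6:
  shows "not_odd_prob \<in> O(\<lambda>n. (ln (real n))^2 / real n)"
proof -
  define G where "G n = (1 + real n * 3)^2 * (3 / (3 * real n))^3 + (1 + real n * 4)^2 * (4 / (3 * real n))^4
      + 2 * ((3 * ln (real n) + 2)^12 * real n / sqrt (real n)^5) + 48 / real n
      + (3 * real n + 1) * (4 * 4^n / (3 * 5^(n-1)))" for n :: nat
  have GO: "G \<in> O(\<lambda>n. (ln (real n))^2 / real n)" unfolding G_def by real_asymp
  have e1: "eventually (\<lambda>n::nat. 5 \<le> n) sequentially" by (rule eventually_ge_at_top)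
  have e2: "eventually (\<lambda>n::nat. (3 * ln (real n) + 2)^2 / sqrt (real n) \<le> 1/2) sequentially" by real_asymp
  have ev: "eventually (\<lambda>n. norm (not_odd_prob n) \<le> norm (G n)) sequentially"
    using e1 e2
  proof eventually_elim
    case (elim n)
    have n: "n \<ge> 5" using elim by simp
    define K where "K = nat \<lceil>3 * ln (real n)\<rceil>"
    have lnp: "ln (real n) \<ge> 0" using n by simp
    have K1: "real K \<ge> 3 * ln (real n)" unfolding K_def using lnp by linarith
    have K2: "real K + 1 \<le> 3 * ln (real n) + 2" unfolding K_def using lnp by linarith
    have sq: "sqrt (real n) > 0" using n by simp
    have Kp: "(real K + 1)^2 \<le> (3 * ln (real n) + 2)^2" using K2 by (intro power_mono) auto
    have rho: "(real K + 1)^2 / sqrt (real n) \<le> 1/2"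
      using divide_right_mono[OF Kp, of "sqrt (real n)"] sq elim(2) by linarith
    define \<rho> where "\<rho> = (real K + 1)^2 / sqrt (real n)"
    have p0: "0 \<le> not_odd_prob n" unfolding not_odd_prob_def by simp
    have "not_odd_prob n \<le> (\<Sum>k\<le>3*n. real (cntT n k)^2 / real ((3*n) choose k))"
      using prob_bound n by simp
    also have "\<dots> \<le> (\<Sum>k\<le>3*n. real (cAB n k)^2 / real ((3*n) choose k))"
      by (intro sum_mono divide_right_mono power_mono) (use cntT_le n in auto)
    also have "\<dots> \<le> (\<Sum>k\<le>3*n. u n K k)" by (intro sum_mono term_k) (use n in auto)
    also have "\<dots> \<le> (1 + real n * 3)^2 * (3 / (3 * real n))^3 + (1 + real n * 4)^2 * (4 / (3 * real n))^4
      + 2 * ((real K+1)^2 * real n * \<rho>^5) + 48 * (2/3)^K + (3 * real n + 1) * (4 * 4^n / (3 * 5^(n-1)))"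
      unfolding \<rho>_def by (rule sum_u_bound[OF n rho])
    also have "\<dots> \<le> G n"
    proof -
      have a: "(real K+1)^2 * real n * \<rho>^5 = (real K + 1)^12 * real n / sqrt (real n)^5"
        unfolding \<rho>_def by (simp add: power_divide power_mult[symmetric])
      have b: "(real K + 1)^12 \<le> (3 * ln (real n) + 2)^12" using K2 by (intro power_mono) auto
      have c: "(real K + 1)^12 * real n / sqrt (real n)^5 \<le> (3 * ln (real n) + 2)^12 * real n / sqrt (real n)^5"
        using b sq by (intro divide_right_mono mult_right_mono) auto
      have d: "48 * (2/3::real)^K \<le> 48 / real n" using pow23[of n K] n K1 by simp
      show ?thesis unfolding G_def using a c d by linarith
    qed
    finally have "not_odd_prob n \<le> G n" .
    then show ?case using p0 by simp
  qed
  have "not_odd_prob \<in> O(G)" by (rule landau_o.big_mono[OF ev])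
  then show ?thesis using GO by (rule landau_o.big_trans)
qed


end
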